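(* For the $8$-pleated bowtie $B_8$, the umbral index satisfies $\mathfrak{u}(B_8)=1$; that is, the set of spectral rank 1 vertices of $B_8$ differs from the set of spectral rank 1 vertices of its clique-shadow $\partial^*B_8$.
   Context: For a connected $k$-uniform hypergraph $H=([n],E)$ and $x\in\mathbb{R}^n$, write $x^e=\prod_{v\in e}x_v$ and $F_H(x)=k\sum_{e\in E}x^e$. The principal eigenvector $y$ of $H$ is the unique strictly positive $y$ with $\|y\|_k=1$ and $\rho\, y_i^{k-1}=\sum_{e\ni i} y^{e\setminus\{i\}}$ for all $i$, where $\rho=\max_{\|z\|_k^k=1}F_H(z)$. The clique-shadow $\partial^*H$ is the multigraph on $[n]$ where $\{u,v\}$ has multiplicity $\mu(uv)=|\{e\in E:u,v\in e\}|$; its principal eigenvector is the positive Perron eigenvector of its adjacency matrix (entries $\mu(uv)$), normalized to unit $2$-norm. The spectral ranking of a (hyper)graph orders vertices by decreasing value of its principal eigenvector, tied vertices sharing a rank; spectral rank 1 vertices are those with maximal entry. The umbral index $\mathfrak{u}(H)$ is the least rank index at which the spectral rankings of $H$ and $\partial^*H$ differ (and $0$ if they coincide). The $t$-pleated bowtie $B_t$ is the $3$-uniform hypergraph on vertices $c,\ell_1,\dots,\ell_{t+2},r_1,\dots,r_{t+2}$ with edge set $\{\{c,r_1,r_2\}\}\cup\{\{c,\ell_1,\ell_j\}: 2\le j\le t+2\}\cup\{\{r_1,r_2,r_j\}: 3\le j\le t+2\}$. *)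

theory Defs
  imports Complex_Main
begin

text \<open>Vectors are functions from vertices to reals
(only their values on V matter; normalised eigenvectors are taken to vanish off V).\<close>

definition F_hyp :: "nat \<Rightarrow> 'v set set \<Rightarrow> ('v \<Rightarrow> real) \<Rightarrow> real" where
  "F_hyp k E x = real k * (\<Sum>e\<in>E. \<Prod>v\<in>e. x v)"

definition spec_radius_hyp :: "nat \<Rightarrow> 'v set \<Rightarrow> 'v set set \<Rightarrow> real" where
  "spec_radius_hyp k V E = Sup {F_hyp k E z | z. (\<Sum>v\<in>V. \<bar>z v\<bar> ^ k) = 1}"

definition principal_eigvec_hyp :: "nat \<Rightarrow> 'v set \<Rightarrow> 'v set set \<Rightarrow> ('v \<Rightarrow> real)" where
  "principal_eigvec_hyp k V E = (THE y.
      (\<forall>v\<in>V. y v > 0) \<and> (\<forall>v. v \<notin> V \<longrightarrow> y v = 0) \<and>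
      (\<Sum>v\<in>V. y v ^ k) = 1 \<and>
      (\<forall>i\<in>V. spec_radius_hyp k V E * y i ^ (k - 1)
               = (\<Sum>e\<in>{e\<in>E. i \<in> e}. \<Prod>u\<in>e - {i}. y u)))"

text \<open>Multiplicity of the pair {u,v} (u \<noteq> v) in the clique-shadow; no loops.\<close>
definition shadow_mult :: "'v set set \<Rightarrow> 'v \<Rightarrow> 'v \<Rightarrow> nat" where
  "shadow_mult E u v = (if u = v then 0 else card {e\<in>E. u \<in> e \<and> v \<in> e})"

definition principal_eigvec_shadow :: "'v set \<Rightarrow> 'v set set \<Rightarrow> ('v \<Rightarrow> real)" where
  "principal_eigvec_shadow V E = (THE x.
      (\<forall>v\<in>V. x v > 0) \<and> (\<forall>v. v \<notin> V \<longrightarrow> x v = 0) \<and>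
      (\<Sum>v\<in>V. x v ^ 2) = 1 \<and>
      (\<exists>mu::real. \<forall>u\<in>V. mu * x u = (\<Sum>v\<in>V. real (shadow_mult E u v) * x v)))"

definition rank_values :: "'v set \<Rightarrow> ('v \<Rightarrow> real) \<Rightarrow> real list" where
  "rank_values V x = rev (sorted_list_of_set (x ` V))"

definition rank_class :: "'v set \<Rightarrow> ('v \<Rightarrow> real) \<Rightarrow> nat \<Rightarrow> 'v set" where
  "rank_class V x i = {v\<in>V. 1 \<le> i \<and> i \<le> length (rank_values V x)
                              \<and> x v = rank_values V x ! (i - 1)}"

definition umbral_index :: "nat \<Rightarrow> 'v set \<Rightarrow> 'v set set \<Rightarrow> nat" where
  "umbral_index k V E =
     (let y = principal_eigvec_hyp k V E; z = principal_eigvec_shadow V E in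
      if \<forall>i\<ge>1. rank_class V y i = rank_class V z i then 0
      else (LEAST i. 1 \<le> i \<and> rank_class V y i \<noteq> rank_class V z i))"

datatype bt_vertex = C | L nat | R nat

definition bowtie_V :: "nat \<Rightarrow> bt_vertex set" where
  "bowtie_V t = {C} \<union> L ` {1..t+2} \<union> R ` {1..t+2}"

definition bowtie_E :: "nat \<Rightarrow> bt_vertex set set" where
  "bowtie_E t = {{C, R 1, R 2}}
              \<union> {{C, L 1, L j} | j. 2 \<le> j \<and> j \<le> t + 2}
              \<union> {{R 1, R 2, R j} | j. 3 \<le> j \<and> j \<le> t + 2}"

end

theory Submission
  imports Defs
begin


lemma V8_eq: "bowtie_V 8 = insert C (L ` {1..10} \<union> R ` {1..10})"
  by (simp add: bowtie_V_def)

lemma finite_V8: "finite (bowtie_V 8)" by (simp add: V8_eq)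

lemma sum_V8: "(\<Sum>v\<in>bowtie_V 8. f v) = f C + (\<Sum>j=1..10. f (L j)) + (\<Sum>j=1..10. f (R j))"
proof -
  have d: "L ` {1..10} \<inter> R ` {1..10} = {}" by auto
  have "(\<Sum>v\<in>bowtie_V 8. f v) = f C + (\<Sum>v\<in>L ` {1..10} \<union> R ` {1..10}. f v)"
    unfolding V8_eq by (subst sum.insert) auto
  also have "\<dots> = f C + (\<Sum>v\<in>L ` {1..10}. f v) + (\<Sum>v\<in>R ` {1..10}. f v)"
    by (subst sum.union_disjoint) (auto simp: add.assoc)
  also have "\<dots> = f C + (\<Sum>j=1..10. f (L j)) + (\<Sum>j=1..10. f (R j))"
    by (subst sum.reindex, simp add: inj_on_def)+ simp
  finally show ?thesis .
qed

definition eL :: "nat \<Rightarrow> bt_vertex set" where "eL j = {C, L 1, L j}"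
definition eR :: "nat \<Rightarrow> bt_vertex set" where "eR j = {R 1, R 2, R j}"

lemma E8_eq: "bowtie_E 8 = insert {C, R 1, R 2} (eL ` {2..10} \<union> eR ` {3..10})"
  unfolding bowtie_E_def eL_def eR_def by auto

lemma finite_E8: "finite (bowtie_E 8)" by (simp add: E8_eq)

lemma inj_eL: "inj_on eL {2..10}"
proof (rule inj_onI)
  fix i j assume i: "i \<in> {2..(10::nat)}" and j: "j \<in> {2..(10::nat)}" and e: "eL i = eL j"
  have "L i \<in> eL i" by (simp add: eL_def)
  then have "L i \<in> eL j" using e by simp
  then have "i = 1 \<or> i = j" by (simp add: eL_def)
  then show "i = j" using i by auto
qed

lemma inj_eR: "inj_on eR {3..10}"
proof (rule inj_onI)
  fix i j assume i: "i \<in> {3..(10::nat)}" and j: "j \<in> {3..(10::nat)}" and e: "eR i = eR j"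
  have "R i \<in> eR i" by (simp add: eR_def)
  then have "R i \<in> eR j" using e by simp
  then have "i = 1 \<or> i = 2 \<or> i = j" by (simp add: eR_def)
  then show "i = j" using i by auto
qed

lemma sum_E8: "(\<Sum>e\<in>bowtie_E 8. H e) = H {C, R 1, R 2} + (\<Sum>j=2..10. H (eL j)) + (\<Sum>j=3..10. H (eR j))"
proof -
  have n: "{C, R 1, R 2} \<notin> eL ` {2..10} \<union> eR ` {3..10}"
    by (auto simp: eL_def eR_def doubleton_eq_iff insert_eq_iff)
  have d: "eL ` {2..10} \<inter> eR ` {3..10} = {}" by (auto simp: eL_def eR_def doubleton_eq_iff insert_eq_iff)
  have "(\<Sum>e\<in>bowtie_E 8. H e) = H {C, R 1, R 2} + (\<Sum>e\<in>eL ` {2..10} \<union> eR ` {3..10}. H e)"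
    unfolding E8_eq using n by (subst sum.insert) auto
  also have "\<dots> = H {C, R 1, R 2} + (\<Sum>e\<in>eL ` {2..10}. H e) + (\<Sum>e\<in>eR ` {3..10}. H e)"
    using d by (subst sum.union_disjoint) (auto simp: add.assoc)
  also have "\<dots> = H {C, R 1, R 2} + (\<Sum>j=2..10. H (eL j)) + (\<Sum>j=3..10. H (eR j))"
    using inj_eL inj_eR by (simp add: sum.reindex)
  finally show ?thesis .
qed

lemma nbr_gen: "(\<Sum>e\<in>{e\<in>bowtie_E 8. i \<in> e}. G e) =
   (if i \<in> {C, R 1, R 2} then G {C, R 1, R 2} else 0)
   + (\<Sum>j=2..10. if i \<in> eL j then G (eL j) else 0)
   + (\<Sum>j=3..10. if i \<in> eR j then G (eR j) else 0)"
  by (simp add: sum.inter_filter[OF finite_E8] sum_E8 del: insert_iff)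

lemma nbr_C: "(\<Sum>e\<in>{e\<in>bowtie_E 8. C \<in> e}. g (e - {C})) = g {R 1, R 2} + (\<Sum>j=2..10. g {L 1, L j})"
proof -
  have 1: "{C, R 1, R 2} - {C} = {R 1, R 2}" by auto
  have 2: "eL j - {C} = {L 1, L j}" for j by (auto simp: eL_def)
  show ?thesis unfolding nbr_gen by (simp add: 1 2 eL_def eR_def)
qed

lemma nbr_L1: "(\<Sum>e\<in>{e\<in>bowtie_E 8. L 1 \<in> e}. g (e - {L 1})) = (\<Sum>j=2..10. g {C, L j})"
proof -
  have 2: "j \<in> {2..10} \<Longrightarrow> eL j - {L 1} = {C, L j}" for j by (auto simp: eL_def)
  show ?thesis unfolding nbr_gen by (auto simp: 2 eR_def eL_def insert_Diff_if intro!: sum.cong)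
qed

lemma nbr_Lk: assumes "2 \<le> k" "k \<le> 10"
  shows "(\<Sum>e\<in>{e\<in>bowtie_E 8. L k \<in> e}. g (e - {L k})) = g {C, L 1}"
proof -
  have 2: "eL k - {L k} = {C, L 1}" using assms by (auto simp: eL_def)
  have 3: "(\<Sum>j=2..10. if L k \<in> eL j then g (eL j - {L k}) else 0) = (\<Sum>j=2..10. if j = k then g {C, L 1} else 0)"
    using assms 2 by (intro sum.cong) (auto simp: eL_def)
  have 4: "(\<Sum>j=3..10. if L k \<in> eR j then g (eR j - {L k}) else 0) = 0"
    by (simp add: eR_def)
  show ?thesis unfolding nbr_gen 3 4 using assms by simp
qed

lemma nbr_R1: "(\<Sum>e\<in>{e\<in>bowtie_E 8. R 1 \<in> e}. g (e - {R 1})) = g {C, R 2} + (\<Sum>j=3..10. g {R 2, R j})"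
proof -
  have 1: "{C, R 1, R 2} - {R 1} = {C, R 2}" by auto
  have 2: "j \<in> {3..10} \<Longrightarrow> eR j - {R 1} = {R 2, R j}" for j by (auto simp: eR_def)
  show ?thesis unfolding nbr_gen by (auto simp: 1 2 eR_def eL_def insert_Diff_if intro!: sum.cong)
qed

lemma nbr_R2: "(\<Sum>e\<in>{e\<in>bowtie_E 8. R 2 \<in> e}. g (e - {R 2})) = g {C, R 1} + (\<Sum>j=3..10. g {R 1, R j})"
proof -
  have 1: "{C, R 1, R 2} - {R 2} = {C, R 1}" by auto
  have 2: "j \<in> {3..10} \<Longrightarrow> eR j - {R 2} = {R 1, R j}" for j by (auto simp: eR_def)
  show ?thesis unfolding nbr_gen by (auto simp: 1 2 eR_def eL_def insert_Diff_if intro!: sum.cong)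
qed

lemma nbr_Rk: assumes "3 \<le> k" "k \<le> 10"
  shows "(\<Sum>e\<in>{e\<in>bowtie_E 8. R k \<in> e}. g (e - {R k})) = g {R 1, R 2}"
proof -
  have 2: "eR k - {R k} = {R 1, R 2}" using assms by (auto simp: eR_def)
  have 3: "(\<Sum>j=3..10. if R k \<in> eR j then g (eR j - {R k}) else 0) = (\<Sum>j=3..10. if j = k then g {R 1, R 2} else 0)"
    using assms 2 by (intro sum.cong) (auto simp: eR_def)
  have 4: "(\<Sum>j=2..10. if R k \<in> eL j then g (eL j - {R k}) else 0) = 0"
    by (simp add: eL_def)
  show ?thesis unfolding nbr_gen 3 4 using assms by simp
qed



lemma dc:
  assumes "finite V" "finite E" "\<forall>e\<in>E. e \<subseteq> V"
  shows "(\<Sum>i\<in>V. \<Sum>e\<in>{e\<in>E. i \<in> e}. g i e) = (\<Sum>e\<in>E. \<Sum>i\<in>e. g i e)"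
proof -
  have "(\<Sum>i\<in>V. \<Sum>e\<in>{e\<in>E. i \<in> e}. g i e) = (\<Sum>e\<in>E. \<Sum>i\<in>{i\<in>V. i \<in> e}. g i e)"
    by (rule sum.swap_restrict[OF assms(1,2)])
  also have "\<dots> = (\<Sum>e\<in>E. \<Sum>i\<in>e. g i e)"
  proof (rule sum.cong[OF refl])
    fix e assume "e \<in> E"
    then have "{i\<in>V. i \<in> e} = e" using assms(3) by auto
    then show "(\<Sum>i\<in>{i\<in>V. i \<in> e}. g i e) = (\<Sum>i\<in>e. g i e)" by simp
  qed
  finally show ?thesis .
qed

lemma hyp_identity:
  fixes y z :: "'v \<Rightarrow> real"
  assumes fin: "finite V" "finite E" and sub: "\<forall>e\<in>E. e \<subseteq> V"
    and pos: "\<forall>v\<in>V. y v > 0"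
    and eig: "\<forall>i\<in>V. lam * y i ^ 2 = (\<Sum>e\<in>{e\<in>E. i \<in> e}. \<Prod>u\<in>e - {i}. y u)"
  shows "lam * (\<Sum>v\<in>V. z v ^ 3) = (\<Sum>e\<in>E. \<Sum>i\<in>e. (\<Prod>u\<in>e. y u) * (z i / y i) ^ 3)"
proof -
  have "(\<Sum>e\<in>E. \<Sum>i\<in>e. (\<Prod>u\<in>e. y u) * (z i / y i) ^ 3)
      = (\<Sum>i\<in>V. \<Sum>e\<in>{e\<in>E. i \<in> e}. (\<Prod>u\<in>e. y u) * (z i / y i) ^ 3)"
    by (rule dc[OF fin sub, symmetric])
  also have "\<dots> = (\<Sum>i\<in>V. lam * z i ^ 3)"
  proof (rule sum.cong[OF refl])
    fix i assume i: "i \<in> V"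
    have fe: "finite e" if "e \<in> E" for e using sub that fin(1) finite_subset by blast
    have "(\<Sum>e\<in>{e\<in>E. i \<in> e}. (\<Prod>u\<in>e. y u) * (z i / y i) ^ 3)
        = (\<Sum>e\<in>{e\<in>E. i \<in> e}. (z i / y i) ^ 3 * y i * (\<Prod>u\<in>e - {i}. y u))"
    proof (rule sum.cong[OF refl])
      fix e assume "e \<in> {e\<in>E. i \<in> e}"
      then have "(\<Prod>u\<in>e. y u) = y i * (\<Prod>u\<in>e - {i}. y u)" using prod.remove[OF fe] by blast
      then show "(\<Prod>u\<in>e. y u) * (z i / y i) ^ 3 = (z i / y i) ^ 3 * y i * (\<Prod>u\<in>e - {i}. y u)" by (simp add: mult_ac)
    qed
    also have "\<dots> = (z i / y i) ^ 3 * y i * (\<Sum>e\<in>{e\<in>E. i \<in> e}. \<Prod>u\<in>e - {i}. y u)"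
      by (simp only: sum_distrib_left)
    also have "\<dots> = (z i / y i) ^ 3 * y i * (lam * y i ^ 2)"
      using eig i by simp
    also have "\<dots> = lam * z i ^ 3"
    proof -
      have "y i > 0" using pos i by auto
      then show ?thesis by (simp add: field_simps power2_eq_square power3_eq_cube)
    qed
    finally show "(\<Sum>e\<in>{e\<in>E. i \<in> e}. (\<Prod>u\<in>e. y u) * (z i / y i) ^ 3) = lam * z i ^ 3" .
  qed
  finally show ?thesis by (simp add: sum_distrib_left[symmetric])
qed

lemma amgm3_raw:
  fixes a b c :: real
  assumes "a \<ge> 0" "b \<ge> 0" "c \<ge> 0"
  shows "2*(a^3 + b^3 + c^3 - 3*(a*b*c)) = (a+b+c) * ((a-b)^2 + (b-c)^2 + (c-a)^2)"
  by algebra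

lemma amgm3:
  fixes a b c :: real
  assumes "a \<ge> 0" "b \<ge> 0" "c \<ge> 0"
  shows "3*(a*b*c) \<le> a^3 + b^3 + c^3"
    and "3*(a*b*c) = a^3 + b^3 + c^3 \<Longrightarrow> a = b \<and> b = c"
proof -
  have q: "(a+b+c) * ((a-b)^2 + (b-c)^2 + (c-a)^2) \<ge> 0" using assms by (intro mult_nonneg_nonneg) auto
  have q2: "2*(a^3 + b^3 + c^3 - 3*(a*b*c)) \<ge> 0" unfolding amgm3_raw[OF assms] by (rule q)
  show "3*(a*b*c) \<le> a^3 + b^3 + c^3" using q2 by simp
  assume eq: "3*(a*b*c) = a^3 + b^3 + c^3"
  then have "2*(a^3 + b^3 + c^3 - 3*(a*b*c)) = 0" by simp
  then have z: "(a+b+c) * ((a-b)^2 + (b-c)^2 + (c-a)^2) = 0" unfolding amgm3_raw[OF assms] .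
  show "a = b \<and> b = c"
  proof (cases "a+b+c = 0")
    case True then show ?thesis using assms by linarith
  next
    case False
    then have "(a-b)^2 + (b-c)^2 + (c-a)^2 = 0" using z by simp
    moreover have "(a-b)^2 \<ge> 0" "(b-c)^2 \<ge> 0" "(c-a)^2 \<ge> 0" by simp_all
    ultimately have "(a-b)^2 = 0" "(b-c)^2 = 0" by linarith+
    then show ?thesis by simp
  qed
qed

lemma amgm_set:
  assumes "card e = 3" "\<forall>v\<in>e. w v \<ge> (0::real)"
  shows "3 * (\<Prod>v\<in>e. w v) \<le> (\<Sum>v\<in>e. w v ^ 3)"
    and "3 * (\<Prod>v\<in>e. w v) = (\<Sum>v\<in>e. w v ^ 3) \<Longrightarrow> \<forall>u\<in>e. \<forall>v\<in>e. w u = w v"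
proof -
  have "\<exists>x y z. e = {x,y,z} \<and> x \<noteq> y \<and> y \<noteq> z \<and> x \<noteq> z"
    using assms(1) by (simp only: card_3_iff)
  then obtain x y z where e: "e = {x,y,z}" "x \<noteq> y" "y \<noteq> z" "x \<noteq> z"
    by (elim exE conjE) 
  have P: "(\<Prod>v\<in>e. w v) = w x * w y * w z" and S: "(\<Sum>v\<in>e. w v ^ 3) = w x ^3 + w y^3 + w z^3"
    using e by (simp_all add: mult.assoc add.assoc)
  have nn: "w x \<ge> 0" "w y \<ge> 0" "w z \<ge> 0" using assms(2) e by auto
  show "3 * (\<Prod>v\<in>e. w v) \<le> (\<Sum>v\<in>e. w v ^ 3)" unfolding P S by (rule amgm3(1)[OF nn])
  assume "3 * (\<Prod>v\<in>e. w v) = (\<Sum>v\<in>e. w v ^ 3)"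
  then have "w x = w y \<and> w y = w z" unfolding P S by (rule amgm3(2)[OF nn])
  then show "\<forall>u\<in>e. \<forall>v\<in>e. w u = w v" using e by auto
qed

lemma prod_split_ratio:
  fixes y z :: "'v \<Rightarrow> real"
  assumes "\<forall>v\<in>e. y v > 0"
  shows "(\<Prod>v\<in>e. z v) = (\<Prod>v\<in>e. y v) * (\<Prod>v\<in>e. z v / y v)"
proof -
  have "(\<Prod>v\<in>e. z v) = (\<Prod>v\<in>e. y v * (z v / y v))"
    using assms by (intro prod.cong) auto
  also have "\<dots> = (\<Prod>v\<in>e. y v) * (\<Prod>v\<in>e. z v / y v)" by (rule prod.distrib)
  finally show ?thesis .
qed

lemma hyp_upper:
  fixes y z :: "'v \<Rightarrow> real"
  assumes fin: "finite V" "finite E" and sub: "\<forall>e\<in>E. e \<subseteq> V"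
    and c3: "\<forall>e\<in>E. card e = 3"
    and pos: "\<forall>v\<in>V. y v > 0"
    and eig: "\<forall>i\<in>V. lam * y i ^ 2 = (\<Sum>e\<in>{e\<in>E. i \<in> e}. \<Prod>u\<in>e - {i}. y u)"
  shows "F_hyp 3 E z \<le> lam * (\<Sum>v\<in>V. \<bar>z v\<bar> ^ 3)"
proof -
  have "F_hyp 3 E z = 3 * (\<Sum>e\<in>E. \<Prod>v\<in>e. z v)" by (simp add: F_hyp_def)
  also have "\<dots> \<le> 3 * (\<Sum>e\<in>E. \<Prod>v\<in>e. \<bar>z v\<bar>)"
  proof -
    have "(\<Prod>v\<in>e. z v) \<le> (\<Prod>v\<in>e. \<bar>z v\<bar>)" for e
      using abs_ge_self[of "\<Prod>v\<in>e. z v"] by (simp add: abs_prod)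
    then show ?thesis by (simp add: sum_mono)
  qed
  also have "\<dots> = (\<Sum>e\<in>E. (\<Prod>v\<in>e. y v) * (3 * (\<Prod>v\<in>e. \<bar>z v\<bar> / y v)))"
  proof -
    have "(\<Prod>v\<in>e. \<bar>z v\<bar>) = (\<Prod>v\<in>e. y v) * (\<Prod>v\<in>e. \<bar>z v\<bar> / y v)" if "e \<in> E" for e
      using sub pos that by (intro prod_split_ratio) auto
    then show ?thesis by (simp add: sum_distrib_left mult_ac)
  qed
  also have "\<dots> \<le> (\<Sum>e\<in>E. (\<Prod>v\<in>e. y v) * (\<Sum>v\<in>e. (\<bar>z v\<bar> / y v) ^ 3))"
  proof (rule sum_mono)
    fix e assume e: "e \<in> E"
    have yp: "\<forall>v\<in>e. y v > 0" using e sub pos by auto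
    have nn: "(\<Prod>v\<in>e. y v) \<ge> 0" using yp by (intro prod_nonneg) auto
    have am: "3 * (\<Prod>v\<in>e. \<bar>z v\<bar> / y v) \<le> (\<Sum>v\<in>e. (\<bar>z v\<bar> / y v) ^ 3)"
      using c3 e yp by (intro amgm_set(1)) auto
    show "(\<Prod>v\<in>e. y v) * (3 * (\<Prod>v\<in>e. \<bar>z v\<bar> / y v)) \<le> (\<Prod>v\<in>e. y v) * (\<Sum>v\<in>e. (\<bar>z v\<bar> / y v) ^ 3)"
      by (rule mult_left_mono[OF am nn])
  qed
  also have "\<dots> = lam * (\<Sum>v\<in>V. \<bar>z v\<bar> ^ 3)"
    using hyp_identity[OF fin sub pos eig, of "\<lambda>v. \<bar>z v\<bar>"] by (simp add: sum_distrib_left)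
  finally show ?thesis .
qed

lemma hyp_value:
  fixes y :: "'v \<Rightarrow> real"
  assumes fin: "finite V" "finite E" and sub: "\<forall>e\<in>E. e \<subseteq> V"
    and c3: "\<forall>e\<in>E. card e = 3"
    and pos: "\<forall>v\<in>V. y v > 0"
    and eig: "\<forall>i\<in>V. lam * y i ^ 2 = (\<Sum>e\<in>{e\<in>E. i \<in> e}. \<Prod>u\<in>e - {i}. y u)"
  shows "F_hyp 3 E y = lam * (\<Sum>v\<in>V. y v ^ 3)"
proof -
  have "lam * (\<Sum>v\<in>V. y v ^ 3) = (\<Sum>e\<in>E. \<Sum>i\<in>e. (\<Prod>u\<in>e. y u) * (y i / y i) ^ 3)"
    by (rule hyp_identity[OF fin sub pos eig])
  also have "\<dots> = (\<Sum>e\<in>E. 3 * (\<Prod>u\<in>e. y u))"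
  proof (rule sum.cong[OF refl])
    fix e assume e: "e \<in> E"
    have "(\<Sum>i\<in>e. (\<Prod>u\<in>e. y u) * (y i / y i) ^ 3) = (\<Sum>i\<in>e. (\<Prod>u\<in>e. y u))"
    proof (rule sum.cong[OF refl])
      fix i assume "i \<in> e"
      then have "y i > 0" using e sub pos by auto
      then show "(\<Prod>u\<in>e. y u) * (y i / y i) ^ 3 = (\<Prod>u\<in>e. y u)" by simp
    qed
    then show "(\<Sum>i\<in>e. (\<Prod>u\<in>e. y u) * (y i / y i) ^ 3) = 3 * (\<Prod>u\<in>e. y u)"
      using c3 e by simp
  qed
  finally show ?thesis by (simp add: F_hyp_def sum_distrib_left)
qed

lemma hyp_ratio:
  fixes y w :: "'v \<Rightarrow> real"
  assumes fin: "finite V" "finite E" and sub: "\<forall>e\<in>E. e \<subseteq> V"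
    and c3: "\<forall>e\<in>E. card e = 3"
    and pos: "\<forall>v\<in>V. y v > 0"
    and eig: "\<forall>i\<in>V. lam * y i ^ 2 = (\<Sum>e\<in>{e\<in>E. i \<in> e}. \<Prod>u\<in>e - {i}. y u)"
    and posw: "\<forall>v\<in>V. w v > 0"
    and eigw: "\<forall>i\<in>V. lam * w i ^ 2 = (\<Sum>e\<in>{e\<in>E. i \<in> e}. \<Prod>u\<in>e - {i}. w u)"
  shows "\<forall>e\<in>E. \<forall>u\<in>e. \<forall>v\<in>e. w u / y u = w v / y v"
proof -
  define T where "T e = (\<Prod>v\<in>e. y v) * ((\<Sum>v\<in>e. (w v / y v) ^ 3) - 3 * (\<Prod>v\<in>e. w v / y v))" for e
  have Tnn: "T e \<ge> 0" if e: "e \<in> E" for e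
  proof -
    have yp: "\<forall>v\<in>e. y v > 0" using e sub pos by auto
    have "(\<Prod>v\<in>e. y v) \<ge> 0" using yp by (intro prod_nonneg) auto
    moreover have "\<forall>v\<in>e. w v / y v \<ge> 0"
    proof
      fix v assume "v \<in> e"
      then have "v \<in> V" using e sub by auto
      then show "w v / y v \<ge> 0" using pos posw by (simp add: less_imp_le)
    qed
    then have "3 * (\<Prod>v\<in>e. w v / y v) \<le> (\<Sum>v\<in>e. (w v / y v) ^ 3)"
      using c3 e by (intro amgm_set(1)) auto
    ultimately show ?thesis unfolding T_def by simp
  qed
  have "F_hyp 3 E w = lam * (\<Sum>v\<in>V. w v ^ 3)" by (rule hyp_value[OF fin sub c3 posw eigw])
  also have "\<dots> = (\<Sum>e\<in>E. \<Sum>i\<in>e. (\<Prod>u\<in>e. y u) * (w i / y i) ^ 3)"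
    by (rule hyp_identity[OF fin sub pos eig])
  finally have A: "3 * (\<Sum>e\<in>E. \<Prod>v\<in>e. w v) = (\<Sum>e\<in>E. (\<Prod>u\<in>e. y u) * (\<Sum>i\<in>e. (w i / y i) ^ 3))"
    by (simp add: F_hyp_def sum_distrib_left)
  have B: "(\<Prod>v\<in>e. w v) = (\<Prod>v\<in>e. y v) * (\<Prod>v\<in>e. w v / y v)" if "e \<in> E" for e
    using sub pos that by (intro prod_split_ratio) auto
  have "(\<Sum>e\<in>E. T e) = (\<Sum>e\<in>E. (\<Prod>u\<in>e. y u) * (\<Sum>i\<in>e. (w i / y i) ^ 3)) - 3 * (\<Sum>e\<in>E. \<Prod>v\<in>e. w v)"
    unfolding T_def using B by (simp add: algebra_simps sum_subtractf sum_distrib_left)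
  then have "(\<Sum>e\<in>E. T e) = 0" using A by simp
  then have T0: "\<forall>e\<in>E. T e = 0" using sum_nonneg_eq_0_iff[OF fin(2)] Tnn by blast
  show ?thesis
  proof (intro ballI)
    fix e u v assume e: "e \<in> E" and uv: "u \<in> e" "v \<in> e"
    have yp: "\<forall>v\<in>e. y v > 0" using e sub pos by auto
    have "(\<Prod>v\<in>e. y v) > 0" using yp by (intro prod_pos) auto
    then have "3 * (\<Prod>v\<in>e. w v / y v) = (\<Sum>v\<in>e. (w v / y v) ^ 3)"
      using T0 e unfolding T_def by force
    moreover have "\<forall>v\<in>e. w v / y v \<ge> 0"
    proof
      fix v assume "v \<in> e"
      then have "v \<in> V" using e sub by auto
      then show "w v / y v \<ge> 0" using pos posw by (simp add: less_imp_le)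
    qed
    ultimately have "\<forall>u\<in>e. \<forall>v\<in>e. w u / y u = w v / y v"
      using c3 e by (intro amgm_set(2)) auto
    then show "w u / y u = w v / y v" using uv by blast
  qed
qed



lemma shadow_rewrite:
  fixes x :: "'v \<Rightarrow> real"
  assumes fin: "finite V" "finite E" and sub: "\<forall>e\<in>E. e \<subseteq> V"
  shows "(\<Sum>v\<in>V. real (shadow_mult E u v) * x v) = (\<Sum>e\<in>{e\<in>E. u \<in> e}. \<Sum>v\<in>e - {u}. x v)"
proof -
  have fE: "finite {e\<in>E. u \<in> e}" using fin by simp
  have 1: "real (shadow_mult E u v) * x v = (\<Sum>e\<in>{e\<in>E. u \<in> e}. if v \<in> e - {u} then x v else 0)" for v
  proof (cases "u = v")
    case True then show ?thesis by (simp add: shadow_mult_def)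
  next
    case False
    have "(\<Sum>e\<in>{e\<in>E. u \<in> e}. if v \<in> e - {u} then x v else 0) = (\<Sum>e\<in>{e\<in>E. u \<in> e}. if v \<in> e then x v else 0)"
      using False by (intro sum.cong) auto
    also have "\<dots> = (\<Sum>e\<in>{e\<in>{e\<in>E. u \<in> e}. v \<in> e}. x v)"
      by (rule sum.inter_filter[OF fE, symmetric])
    also have "{e\<in>{e\<in>E. u \<in> e}. v \<in> e} = {e\<in>E. u \<in> e \<and> v \<in> e}" by auto
    finally show ?thesis using False by (simp add: shadow_mult_def)
  qed
  have "(\<Sum>v\<in>V. real (shadow_mult E u v) * x v) = (\<Sum>v\<in>V. \<Sum>e\<in>{e\<in>E. u \<in> e}. if v \<in> e - {u} then x v else 0)"
    using 1 by simp
  also have "\<dots> = (\<Sum>e\<in>{e\<in>E. u \<in> e}. \<Sum>v\<in>V. if v \<in> e - {u} then x v else 0)"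
    by (rule sum.swap)
  also have "\<dots> = (\<Sum>e\<in>{e\<in>E. u \<in> e}. \<Sum>v\<in>e - {u}. x v)"
  proof (rule sum.cong[OF refl])
    fix e assume e: "e \<in> {e\<in>E. u \<in> e}"
    have "(\<Sum>v\<in>V. if v \<in> e - {u} then x v else 0) = (\<Sum>v\<in>{v\<in>V. v \<in> e - {u}}. x v)"
      by (rule sum.inter_filter[OF fin(1), symmetric])
    also have "{v\<in>V. v \<in> e - {u}} = e - {u}" using e sub by auto
    finally show "(\<Sum>v\<in>V. if v \<in> e - {u} then x v else 0) = (\<Sum>v\<in>e - {u}. x v)" .
  qed
  finally show ?thesis .
qed

lemma shadow_ratio:
  fixes M :: "'v \<Rightarrow> 'v \<Rightarrow> real" and x p :: "'v \<Rightarrow> real"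
  assumes fin: "finite V" and sym: "\<And>u v. M u v = M v u" and nn: "\<And>u v. M u v \<ge> 0"
    and posx: "\<forall>v\<in>V. x v > 0" and posp: "\<forall>v\<in>V. p v > 0"
    and eigx: "\<forall>u\<in>V. mu * x u = (\<Sum>v\<in>V. M u v * x v)"
    and eigp: "\<forall>u\<in>V. nu * p u = (\<Sum>v\<in>V. M u v * p v)"
  shows "\<forall>u\<in>V. \<forall>v\<in>V. M u v > 0 \<longrightarrow> x u / p u = x v / p v"
proof (cases "V = {}")
  case True then show ?thesis by simp
next
  case False
  define q where "q u = x u / p u" for u
  have xq: "x u = p u * q u" if "u \<in> V" for u
  proof -
    have "p u > 0" using posp that by auto
    then show ?thesis by (simp add: q_def)
  qed
  have "mu * (\<Sum>u\<in>V. p u * x u) = (\<Sum>u\<in>V. p u * (mu * x u))" by (simp add: sum_distrib_left mult_ac)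
  also have "\<dots> = (\<Sum>u\<in>V. \<Sum>v\<in>V. p u * M u v * x v)"
    using eigx by (simp add: sum_distrib_left mult_ac)
  also have "\<dots> = (\<Sum>v\<in>V. \<Sum>u\<in>V. p u * M u v * x v)" by (rule sum.swap)
  also have "\<dots> = (\<Sum>v\<in>V. x v * (\<Sum>u\<in>V. M v u * p u))"
    by (simp add: sum_distrib_left mult_ac sym)
  also have "\<dots> = (\<Sum>v\<in>V. x v * (nu * p v))" using eigp by simp
  also have "\<dots> = nu * (\<Sum>u\<in>V. p u * x u)" by (simp add: sum_distrib_left mult_ac)
  finally have e1: "mu * (\<Sum>u\<in>V. p u * x u) = nu * (\<Sum>u\<in>V. p u * x u)" .
  have "(\<Sum>u\<in>V. p u * x u) > 0"
    using False fin posx posp by (intro sum_pos) auto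
  then have munu: "mu = nu" using e1 by simp
  define T where "T u v = M u v * p u * p v * (q u - q v)^2" for u v
  have S1: "(\<Sum>u\<in>V. \<Sum>v\<in>V. M u v * p u * p v * q u ^ 2) = nu * (\<Sum>u\<in>V. x u ^ 2)"
  proof -
    have "(\<Sum>u\<in>V. \<Sum>v\<in>V. M u v * p u * p v * q u ^ 2) = (\<Sum>u\<in>V. (p u * q u ^ 2) * (\<Sum>v\<in>V. M u v * p v))"
      by (simp add: sum_distrib_left mult_ac)
    also have "\<dots> = (\<Sum>u\<in>V. (p u * q u ^ 2) * (nu * p u))" using eigp by simp
    also have "\<dots> = (\<Sum>u\<in>V. nu * x u ^ 2)"
      using xq by (intro sum.cong) (auto simp: power2_eq_square mult_ac)
    finally show ?thesis by (simp add: sum_distrib_left)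
  qed
  have S2: "(\<Sum>u\<in>V. \<Sum>v\<in>V. M u v * p u * p v * q v ^ 2) = nu * (\<Sum>u\<in>V. x u ^ 2)"
  proof -
    have "(\<Sum>u\<in>V. \<Sum>v\<in>V. M u v * p u * p v * q v ^ 2) = (\<Sum>v\<in>V. \<Sum>u\<in>V. M u v * p u * p v * q v ^ 2)"
      by (rule sum.swap)
    also have "\<dots> = (\<Sum>u\<in>V. \<Sum>v\<in>V. M u v * p u * p v * q u ^ 2)"
      by (simp add: sym mult_ac)
    finally show ?thesis using S1 by simp
  qed
  have S3: "(\<Sum>u\<in>V. \<Sum>v\<in>V. M u v * p u * p v * (q u * q v)) = mu * (\<Sum>u\<in>V. x u ^ 2)"
  proof -
    have "(\<Sum>u\<in>V. \<Sum>v\<in>V. M u v * p u * p v * (q u * q v)) = (\<Sum>u\<in>V. \<Sum>v\<in>V. x u * (M u v * x v))"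
      using xq by (intro sum.cong) (auto simp: mult_ac)
    also have "\<dots> = (\<Sum>u\<in>V. x u * (mu * x u))" using eigx by (simp add: sum_distrib_left)
    finally show ?thesis by (simp add: sum_distrib_left power2_eq_square mult_ac)
  qed
  have "(\<Sum>u\<in>V. \<Sum>v\<in>V. T u v) = (\<Sum>u\<in>V. \<Sum>v\<in>V. M u v * p u * p v * q u ^ 2)
      + (\<Sum>u\<in>V. \<Sum>v\<in>V. M u v * p u * p v * q v ^ 2)
      - 2 * (\<Sum>u\<in>V. \<Sum>v\<in>V. M u v * p u * p v * (q u * q v))"
    unfolding T_def by (simp add: power2_diff algebra_simps sum.distrib sum_subtractf sum_distrib_left)
  also have "\<dots> = 0" using S1 S2 S3 munu by simp
  finally have T0: "(\<Sum>u\<in>V. \<Sum>v\<in>V. T u v) = 0" .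
  have Tnn: "T u v \<ge> 0" if "u \<in> V" "v \<in> V" for u v
    using that posp nn unfolding T_def by (intro mult_nonneg_nonneg) (auto intro: less_imp_le)
  have "(\<Sum>u\<in>V. \<Sum>v\<in>V. T u v) = 0 \<longleftrightarrow> (\<forall>u\<in>V. (\<Sum>v\<in>V. T u v) = 0)"
    by (rule sum_nonneg_eq_0_iff[OF fin]) (simp add: sum_nonneg Tnn)
  then have "\<forall>u\<in>V. (\<Sum>v\<in>V. T u v) = 0" using T0 by blast
  then have TT: "\<forall>u\<in>V. \<forall>v\<in>V. T u v = 0"
    using sum_nonneg_eq_0_iff[OF fin] Tnn by blast
  show ?thesis
  proof (intro ballI impI)
    fix u v assume uv: "u \<in> V" "v \<in> V" and M: "M u v > 0"
    then have "M u v * p u * p v > 0" using posp by simp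
    then have "(q u - q v)^2 = 0" using TT uv unfolding T_def by force
    then show "x u / p u = x v / p v" unfolding q_def by simp
  qed
qed



lemma num1:
  fixes p :: real assumes "p \<ge> 469/100" shows "p^3 > p^2 + 81"
proof -
  have "p^2 \<ge> (469/100)^2" using assms by (intro power_mono) auto
  moreover have "p - 1 \<ge> 369/100" using assms by simp
  ultimately have "p^2 * (p - 1) \<ge> (469/100)^2 * (369/100)"
    by (intro mult_mono) auto
  moreover have "p^3 - p^2 = p^2 * (p - 1)" by (simp add: algebra_simps power2_eq_square power3_eq_cube)
  moreover have "(469/100)^2 * (369/100) > (81::real)" by (simp add: power2_eq_square)
  ultimately show ?thesis by linarith
qed

lemma num2:
  fixes p :: real assumes "p < 469/100" "p > 1" shows "p * (p - 1)^2 < 64"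
proof -
  have "(p - 1)^2 \<le> (369/100)^2" using assms by (intro power_mono) auto
  then have "p * (p - 1)^2 \<le> p * (369/100)^2" using assms by (intro mult_left_mono) auto
  also have "\<dots> < (469/100) * (369/100)^2" using assms by simp
  also have "(469/100) * (369/100)^2 < (64::real)" by (simp add: power2_eq_square)
  finally show ?thesis .
qed

lemma hyp_alg:
  fixes p c a b r1 r2 s :: real
  assumes pos: "p > 0" "c > 0" "a > 0" "b > 0" "r1 > 0" "r2 > 0" "s > 0"
    and e1: "p * a^2 = 9 * (c * b)" and e2: "p * b^2 = c * a"
    and e3: "p * c^2 = r1 * r2 + 9 * (a * b)"
    and e4: "p * r1^2 = c * r2 + 8 * (r2 * s)"
    and e5: "p * r2^2 = c * r1 + 8 * (r1 * s)"
    and e6: "p * s^2 = r1 * r2"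
  shows "r1 > c"
proof -
  have "p * r1^3 = r1 * (p * r1^2)" by (simp add: power2_eq_square power3_eq_cube)
  also have "\<dots> = r2 * (p * r2^2)" using e4 e5 by (simp add: algebra_simps)
  also have "\<dots> = p * r2^3" by (simp add: power2_eq_square power3_eq_cube)
  finally have "r1^3 = r2^3" using pos by simp
  then have r12: "r1 = r2" using pos by (metis less_imp_le power_eq_imp_eq_base zero_less_numeral)
  have "r1 * (p * r1) = r1 * (c + 8 * s)" using e4 r12 by (simp add: algebra_simps power2_eq_square)
  then have e4': "p * r1 = c + 8 * s" using pos by simp
  have "(p * a^2) * (p * b^2) = 9 * (c * b) * (c * a)" using e1 e2 by simp
  then have "(a * b) * (p^2 * (a * b)) = (a * b) * (9 * c^2)" by (simp add: algebra_simps power2_eq_square)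
  then have ab: "p^2 * (a * b) = 9 * c^2" using pos by simp
  show ?thesis
  proof (rule ccontr)
    assume "\<not> r1 > c"
    then have rc: "r1 \<le> c" by simp
    have "r1 * r2 \<le> c^2" using rc r12 pos by (simp add: power2_eq_square mult_mono)
    then have "p * c^2 \<le> c^2 + 9 * (a * b)" using e3 by simp
    then have "p^2 * (p * c^2) \<le> p^2 * (c^2 + 9 * (a * b))" using pos by (simp add: mult_left_mono)
    also have "\<dots> = c^2 * (p^2 + 81)" using ab by (simp add: algebra_simps)
    finally have "c^2 * p^3 \<le> c^2 * (p^2 + 81)" by (simp add: power2_eq_square power3_eq_cube mult_ac)
    then have A: "p^3 \<le> p^2 + 81" using pos by simp
    have "(p - 1) * r1 \<ge> 8 * s" using e4' rc by (simp add: algebra_simps)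
    then have "(p - 1) * r1 > 0" using pos by linarith
    then have p1: "p > 1" using pos by (simp add: zero_less_mult_iff)
    have "((p - 1) * r1)^2 \<ge> (8 * s)^2" using \<open>(p - 1) * r1 \<ge> 8 * s\<close> pos by (intro power_mono) auto
    then have "p * ((p - 1) * r1)^2 \<ge> p * (8 * s)^2" using pos by (simp add: mult_left_mono)
    also have "p * (8 * s)^2 = 64 * r1^2" using e6 r12 by (simp add: power2_eq_square algebra_simps)
    finally have "r1^2 * (p * (p - 1)^2) \<ge> r1^2 * 64" by (simp add: power2_eq_square algebra_simps)
    then have B: "p * (p - 1)^2 \<ge> 64" using pos by simp
    show False
    proof (cases "p \<ge> 469/100")
      case True then show False using num1 A by force
    next
      case False then show False using num2[of p] p1 B by simp
    qed
  qed
qed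

lemma sh_alg:
  fixes m c a b r1 r2 s :: real
  assumes pos: "m > 0" "c > 0" "a > 0" "b > 0" "r1 > 0" "r2 > 0" "s > 0"
    and eC: "m * c = r1 + r2 + 9 * a + 9 * b"
    and eA: "m * a = 9 * c + 9 * b"
    and eB: "m * b = c + a"
    and eR1: "m * r1 = c + 9 * r2 + 8 * s"
    and eR2: "m * r2 = c + 9 * r1 + 8 * s"
    and eS: "m * s = r1 + r2"
  shows "a < c \<and> b < c \<and> r1 < c \<and> r2 < c \<and> s < c"
proof -
  have "(m + 9) * (r1 - r2) = 0" using eR1 eR2 by (simp add: algebra_simps)
  then have r12: "r1 = r2" using pos by simp
  have "(m + 9) * (c - a) = 2 * r1" using eC eA r12 by (simp add: algebra_simps)
  then have "(m + 9) * (c - a) > 0" using pos by linarith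
  then have ac: "a < c" using pos by (simp add: zero_less_mult_iff)
  have "m * a > 9 * a" using eA ac pos by simp
  then have m9: "m > 9" using pos by simp
  have bc: "b < c"
  proof -
    have "m * b < 2 * c" using eB ac by simp
    also have "\<dots> < m * c" using m9 pos by simp
    finally show ?thesis using pos by simp
  qed
  have rc: "r1 < c"
  proof (rule ccontr)
    assume "\<not> r1 < c" then have cr: "c \<le> r1" by simp
    have "m * (m * r1) = m * c + 9 * m * r1 + 8 * (m * s)" using eR2 r12 by (simp add: algebra_simps)
    also have "\<dots> = m * c + 9 * m * r1 + 16 * r1" using eS r12 by simp
    also have "\<dots> \<le> m * r1 + 9 * m * r1 + 16 * r1" using cr pos by simp
    finally have "r1 * (m^2) \<le> r1 * (10 * m + 16)" by (simp add: algebra_simps power2_eq_square)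
    then have Q: "m^2 \<le> 10 * m + 16" using pos by simp
    have "m * (m * c) = m * (r1 + r2) + 9 * (m * a) + 9 * (m * b)" using eC by (simp add: algebra_simps)
    also have "\<dots> \<ge> 2 * m * c + 9 * (m * a) + 9 * (m * b)" using cr r12 pos by simp
    finally have "m * (m * c) \<ge> 2 * m * c + 9 * (m * a) + 9 * (c + a)" using eB by simp
    then have I1: "c * (m^2 - 2*m - 9) \<ge> 9 * a * (m + 1)" by (simp add: algebra_simps power2_eq_square)
    have I2: "a * (m^2 - 9) = 9 * c * (m + 1)" using eA eB by algebra
    have "m^2 > 9^2" using m9 by (intro power_strict_mono) auto
    then have D1: "m^2 - 9 > 0" by simp
    have "c * (m^2 - 2*m - 9) * (m^2 - 9) \<ge> 9 * a * (m + 1) * (m^2 - 9)"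
      using I1 D1 by (simp add: mult_right_mono)
    also have "9 * a * (m + 1) * (m^2 - 9) = 81 * c * (m + 1)^2" using I2 by algebra
    finally have "c * ((m^2 - 2*m - 9) * (m^2 - 9)) \<ge> c * (81 * (m + 1)^2)" by (simp add: algebra_simps)
    then have K: "(m^2 - 2*m - 9) * (m^2 - 9) \<ge> 81 * (m + 1)^2" using pos by simp
    have u1: "m^2 - 2*m - 9 \<le> 8*m + 7" using Q by simp
    have u2: "m^2 - 9 \<le> 10*m + 7" using Q by simp
    have "(m^2 - 2*m - 9) * (m^2 - 9) \<le> (8*m + 7) * (10*m + 7)"
      using u1 u2 D1 m9 by (intro mult_mono) auto
    also have "\<dots> < 81 * (m + 1)^2" using m9 by (simp add: algebra_simps power2_eq_square add_pos_pos)
    finally show False using K by simp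
  qed
  have "9 * s < m * s" using m9 pos by simp
  then have "s < r1" using eS r12 pos by linarith
  then show ?thesis using ac bc rc r12 by simp
qed



lemma sub8: "\<forall>e\<in>bowtie_E 8. e \<subseteq> bowtie_V 8"
  unfolding E8_eq V8_eq eL_def eR_def by auto

lemma card8: "\<forall>e\<in>bowtie_E 8. card e = 3"
proof -
  have 1: "card (eL j) = 3" if "j \<in> {2..10}" for j
  proof -
    have "j \<noteq> 1" using that by simp
    then show ?thesis by (simp add: eL_def)
  qed
  have 2: "card (eR j) = 3" if "j \<in> {3..10}" for j
  proof -
    have "j \<noteq> 1" "j \<noteq> 2" using that by simp_all
    then show ?thesis by (simp add: eR_def)
  qed
  have 3: "card {C, R 1, R 2} = 3" by simp
  show ?thesis unfolding E8_eq using 1 2 3 by blast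
qed

lemma pairH: "\<forall>u\<in>e. \<forall>v\<in>e. f u = f v \<Longrightarrow> u \<in> e \<Longrightarrow> v \<in> e \<Longrightarrow> f u = f v"
  by blast

lemma conn8:
  assumes H: "\<forall>e\<in>bowtie_E 8. \<forall>u\<in>e. \<forall>v\<in>e. f u = f v"
  shows "\<forall>v\<in>bowtie_V 8. f v = f C"
proof -
  have eLin: "eL j \<in> bowtie_E 8" if "j \<in> {2..10}" for j using that by (simp add: E8_eq)
  have eRin: "eR j \<in> bowtie_E 8" if "j \<in> {3..10}" for j using that by (simp add: E8_eq)
  have e0: "{C, R 1, R 2} \<in> bowtie_E 8" by (simp add: E8_eq)
  have mL: "C \<in> eL j" "L 1 \<in> eL j" "L j \<in> eL j" for j by (simp_all add: eL_def)
  have mR: "R 1 \<in> eR j" "R 2 \<in> eR j" "R j \<in> eR j" for j by (simp_all add: eR_def)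
  have fL: "f (L j) = f C" if "j \<in> {2..10}" for j
    by (rule pairH[OF bspec[OF H eLin[OF that]] mL(3) mL(1)])
  have e2: "eL 2 \<in> bowtie_E 8" using eLin[of 2] by simp
  have fL1: "f (L 1) = f C" by (rule pairH[OF bspec[OF H e2] mL(2) mL(1)])
  have fR1: "f (R 1) = f C" by (rule pairH[OF bspec[OF H e0]]) auto
  have fR2: "f (R 2) = f C" by (rule pairH[OF bspec[OF H e0]]) auto
  have fR: "f (R j) = f C" if "j \<in> {3..10}" for j
  proof -
    have "f (R j) = f (R 1)" by (rule pairH[OF bspec[OF H eRin[OF that]] mR(3) mR(1)])
    then show ?thesis using fR1 by simp
  qed
  show ?thesis
  proof
    fix v assume "v \<in> bowtie_V 8"
    then consider "v = C" | j where "v = L j" "j \<in> {1..10}" | j where "v = R j" "j \<in> {1..10}"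
      unfolding V8_eq by auto
    then show "f v = f C"
    proof cases
      case 1 then show ?thesis by simp
    next
      case (2 j)
      show ?thesis
      proof (cases "j = 1")
        case True then show ?thesis using 2 fL1 by simp
      next
        case False then have "j \<in> {2..10}" using 2 by auto
        then show ?thesis using 2 fL by simp
      qed
    next
      case (3 j)
      show ?thesis
      proof (cases "j = 1 \<or> j = 2")
        case True then show ?thesis using 3 fR1 fR2 by auto
      next
        case False then have "j \<in> {3..10}" using 3 by auto
        then show ?thesis using 3 fR by simp
      qed
    qed
  qed
qed

definition NP :: "(bt_vertex \<Rightarrow> real) \<Rightarrow> bt_vertex \<Rightarrow> real" where
  "NP y i = (\<Sum>e\<in>{e\<in>bowtie_E 8. i \<in> e}. \<Prod>u\<in>e - {i}. y u)"

lemma NP_C: "NP y C = y (R 1) * y (R 2) + (\<Sum>j=2..10. y (L 1) * y (L j))"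
  unfolding NP_def nbr_C by (auto intro!: sum.cong)
lemma NP_L1: "NP y (L 1) = (\<Sum>j=2..10. y C * y (L j))"
  unfolding NP_def nbr_L1 by (auto intro!: sum.cong)
lemma NP_Lk: "2 \<le> k \<Longrightarrow> k \<le> 10 \<Longrightarrow> NP y (L k) = y C * y (L 1)"
  unfolding NP_def by (subst nbr_Lk) auto
lemma NP_R1: "NP y (R 1) = y C * y (R 2) + (\<Sum>j=3..10. y (R 2) * y (R j))"
  unfolding NP_def nbr_R1 by (auto intro!: sum.cong)
lemma NP_R2: "NP y (R 2) = y C * y (R 1) + (\<Sum>j=3..10. y (R 1) * y (R j))"
  unfolding NP_def nbr_R2 by (auto intro!: sum.cong)
lemma NP_Rk: "3 \<le> k \<Longrightarrow> k \<le> 10 \<Longrightarrow> NP y (R k) = y (R 1) * y (R 2)"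
  unfolding NP_def by (subst nbr_Rk) auto

definition NS :: "(bt_vertex \<Rightarrow> real) \<Rightarrow> bt_vertex \<Rightarrow> real" where
  "NS y i = (\<Sum>e\<in>{e\<in>bowtie_E 8. i \<in> e}. \<Sum>u\<in>e - {i}. y u)"

lemma NS_C: "NS y C = y (R 1) + y (R 2) + (\<Sum>j=2..10. y (L 1) + y (L j))"
  unfolding NS_def nbr_C by (auto intro!: sum.cong)
lemma NS_L1: "NS y (L 1) = (\<Sum>j=2..10. y C + y (L j))"
  unfolding NS_def nbr_L1 by (auto intro!: sum.cong)
lemma NS_Lk: "2 \<le> k \<Longrightarrow> k \<le> 10 \<Longrightarrow> NS y (L k) = y C + y (L 1)"
  unfolding NS_def by (subst nbr_Lk) auto
lemma NS_R1: "NS y (R 1) = y C + y (R 2) + (\<Sum>j=3..10. y (R 2) + y (R j))"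
  unfolding NS_def nbr_R1 by (auto intro!: sum.cong)
lemma NS_R2: "NS y (R 2) = y C + y (R 1) + (\<Sum>j=3..10. y (R 1) + y (R j))"
  unfolding NS_def nbr_R2 by (auto intro!: sum.cong)
lemma NS_Rk: "3 \<le> k \<Longrightarrow> k \<le> 10 \<Longrightarrow> NS y (R k) = y (R 1) + y (R 2)"
  unfolding NS_def by (subst nbr_Rk) auto

lemma shadow_NS: "(\<Sum>v\<in>bowtie_V 8. real (shadow_mult (bowtie_E 8) u v) * x v) = NS x u"
  unfolding NS_def by (rule shadow_rewrite[OF finite_V8 finite_E8 sub8])

lemma memV: "C \<in> bowtie_V 8" "j \<in> {1..10} \<Longrightarrow> L j \<in> bowtie_V 8" "j \<in> {1..10} \<Longrightarrow> R j \<in> bowtie_V 8"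
  by (auto simp: V8_eq)



lemma hyp_order:
  fixes y :: "bt_vertex \<Rightarrow> real"
  assumes pos: "\<forall>v\<in>bowtie_V 8. y v > 0"
    and eig: "\<forall>i\<in>bowtie_V 8. p * y i ^ 2 = NP y i"
  shows "y (R 1) > y C"
proof -
  define c where "c = y C"
  define a where "a = y (L 1)"
  define b where "b = y (L 2)"
  define r1 where "r1 = y (R 1)"
  define r2 where "r2 = y (R 2)"
  define s where "s = y (R 3)"
  note defs = c_def a_def b_def r1_def r2_def s_def
  have pc: "c > 0" "a > 0" "b > 0" "r1 > 0" "r2 > 0" "s > 0"
    unfolding defs using bspec[OF pos memV(1)] bspec[OF pos memV(2)[of 1]] bspec[OF pos memV(2)[of 2]] bspec[OF pos memV(3)[of 1]] bspec[OF pos memV(3)[of 2]] bspec[OF pos memV(3)[of 3]] by simp_all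
  have eLk: "p * y (L k) ^ 2 = c * a" if "k \<in> {2..10}" for k
    using bspec[OF eig memV(2)[of k]] that NP_Lk[of k y] unfolding defs by simp
  have eRk: "p * y (R k) ^ 2 = r1 * r2" if "k \<in> {3..10}" for k
    using bspec[OF eig memV(3)[of k]] that NP_Rk[of k y] unfolding defs by simp
  have eb: "p * b^2 = c * a" using eLk[of 2] unfolding defs by simp
  then have "p * b^2 > 0" using pc by simp
  then have pp: "p > 0" using pc by (simp add: zero_less_mult_iff)
  have yL: "y (L k) = b" if "k \<in> {2..10}" for k
  proof -
    have "p * y (L k) ^ 2 = p * b ^ 2" using eLk[OF that] eb by simp
    then have sq: "y (L k) ^ 2 = b ^ 2" using pp by simp
    have yp: "y (L k) > 0" using bspec[OF pos memV(2)[of k]] that by simp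
    show ?thesis by (rule power2_eq_imp_eq[OF sq]) (use pc yp in auto)
  qed
  have yR: "y (R k) = s" if "k \<in> {3..10}" for k
  proof -
    have "p * y (R k) ^ 2 = p * s ^ 2" using eRk[OF that] eRk[of 3] unfolding s_def by simp
    then have sq: "y (R k) ^ 2 = s ^ 2" using pp by simp
    have yp: "y (R k) > 0" using bspec[OF pos memV(3)[of k]] that by simp
    show ?thesis by (rule power2_eq_imp_eq[OF sq]) (use pc yp in auto)
  qed
  have s1: "(\<Sum>j=2..10. y C * y (L j)) = 9 * (c * b)"
  proof -
    have "(\<Sum>j=2..10. y C * y (L j)) = (\<Sum>j::nat=2..10. c * b)" using yL c_def a_def by (intro sum.cong) auto
    then show ?thesis by simp
  qed
  have s2: "(\<Sum>j=2..10. y (L 1) * y (L j)) = 9 * (a * b)"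
  proof -
    have "(\<Sum>j=2..10. y (L 1) * y (L j)) = (\<Sum>j::nat=2..10. a * b)" using yL c_def a_def by (intro sum.cong) auto
    then show ?thesis by simp
  qed
  have s3: "(\<Sum>j=3..10. y (R 2) * y (R j)) = 8 * (r2 * s)"
  proof -
    have "(\<Sum>j=3..10. y (R 2) * y (R j)) = (\<Sum>j::nat=3..10. r2 * s)" using yR r1_def r2_def by (intro sum.cong) auto
    then show ?thesis by simp
  qed
  have s4: "(\<Sum>j=3..10. y (R 1) * y (R j)) = 8 * (r1 * s)"
  proof -
    have "(\<Sum>j=3..10. y (R 1) * y (R j)) = (\<Sum>j::nat=3..10. r1 * s)" using yR r1_def r2_def by (intro sum.cong) auto
    then show ?thesis by simp
  qed
  have e1: "p * a^2 = 9 * (c * b)" using bspec[OF eig memV(2)[of 1]] NP_L1[of y] s1 unfolding defs by simp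
  have e2: "p * b^2 = c * a" by (rule eb)
  have e3: "p * c^2 = r1 * r2 + 9 * (a * b)" using bspec[OF eig memV(1)] NP_C[of y] s2 unfolding defs by simp
  have e4: "p * r1^2 = c * r2 + 8 * (r2 * s)" using bspec[OF eig memV(3)[of 1]] NP_R1[of y] s3 unfolding defs by simp
  have e5: "p * r2^2 = c * r1 + 8 * (r1 * s)" using bspec[OF eig memV(3)[of 2]] NP_R2[of y] s4 unfolding defs by simp
  have e6: "p * s^2 = r1 * r2" using eRk[of 3] unfolding s_def by simp
  have "r1 > c" by (rule hyp_alg[OF pp pc e1 e2 e3 e4 e5 e6])
  then show ?thesis unfolding defs .
qed

lemma sh_order:
  fixes x :: "bt_vertex \<Rightarrow> real"
  assumes pos: "\<forall>v\<in>bowtie_V 8. x v > 0"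
    and eig: "\<forall>i\<in>bowtie_V 8. m * x i = NS x i"
  shows "\<forall>v\<in>bowtie_V 8. x v \<le> x C"
proof -
  define c where "c = x C"
  define a where "a = x (L 1)"
  define b where "b = x (L 2)"
  define r1 where "r1 = x (R 1)"
  define r2 where "r2 = x (R 2)"
  define s where "s = x (R 3)"
  note defs = c_def a_def b_def r1_def r2_def s_def
  have pc: "c > 0" "a > 0" "b > 0" "r1 > 0" "r2 > 0" "s > 0"
    unfolding defs using bspec[OF pos memV(1)] bspec[OF pos memV(2)[of 1]] bspec[OF pos memV(2)[of 2]] bspec[OF pos memV(3)[of 1]] bspec[OF pos memV(3)[of 2]] bspec[OF pos memV(3)[of 3]] by simp_all
  have eLk: "m * x (L k) = c + a" if "k \<in> {2..10}" for k
    using bspec[OF eig memV(2)[of k]] that NS_Lk[of k x] unfolding defs by simp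
  have eRk: "m * x (R k) = r1 + r2" if "k \<in> {3..10}" for k
    using bspec[OF eig memV(3)[of k]] that NS_Rk[of k x] unfolding defs by simp
  have eB: "m * b = c + a" using eLk[of 2] unfolding defs by simp
  then have "m * b > 0" using pc by simp
  then have pp: "m > 0" using pc by (simp add: zero_less_mult_iff)
  have yL: "x (L k) = b" if "k \<in> {2..10}" for k
  proof -
    have "m * x (L k) = m * b" using eLk[OF that] eB by simp
    then show ?thesis using pp by simp
  qed
  have yR: "x (R k) = s" if "k \<in> {3..10}" for k
  proof -
    have "m * x (R k) = m * s" using eRk[OF that] eRk[of 3] s_def by simp
    then show ?thesis using pp by simp
  qed
  have s1: "(\<Sum>j=2..10. x C + x (L j)) = 9 * (c + b)"
  proof -
    have "(\<Sum>j=2..10. x C + x (L j)) = (\<Sum>j::nat=2..10. c + b)" using yL c_def a_def by (intro sum.cong) auto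
    then show ?thesis by simp
  qed
  have s2: "(\<Sum>j=2..10. x (L 1) + x (L j)) = 9 * (a + b)"
  proof -
    have "(\<Sum>j=2..10. x (L 1) + x (L j)) = (\<Sum>j::nat=2..10. a + b)" using yL c_def a_def by (intro sum.cong) auto
    then show ?thesis by simp
  qed
  have s3: "(\<Sum>j=3..10. x (R 2) + x (R j)) = 8 * (r2 + s)"
  proof -
    have "(\<Sum>j=3..10. x (R 2) + x (R j)) = (\<Sum>j::nat=3..10. r2 + s)" using yR r1_def r2_def by (intro sum.cong) auto
    then show ?thesis by simp
  qed
  have s4: "(\<Sum>j=3..10. x (R 1) + x (R j)) = 8 * (r1 + s)"
  proof -
    have "(\<Sum>j=3..10. x (R 1) + x (R j)) = (\<Sum>j::nat=3..10. r1 + s)" using yR r1_def r2_def by (intro sum.cong) auto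
    then show ?thesis by simp
  qed
  have eA: "m * a = 9 * c + 9 * b" using bspec[OF eig memV(2)[of 1]] NS_L1[of x] s1 unfolding defs by simp
  have eC: "m * c = r1 + r2 + 9 * a + 9 * b" using bspec[OF eig memV(1)] NS_C[of x] s2 unfolding defs by simp
  have eR1: "m * r1 = c + 9 * r2 + 8 * s" using bspec[OF eig memV(3)[of 1]] NS_R1[of x] s3 unfolding defs by simp
  have eR2: "m * r2 = c + 9 * r1 + 8 * s" using bspec[OF eig memV(3)[of 2]] NS_R2[of x] s4 unfolding defs by simp
  have eS: "m * s = r1 + r2" using eRk[of 3] unfolding defs by simp
  have ord: "a < c \<and> b < c \<and> r1 < c \<and> r2 < c \<and> s < c"
    by (rule sh_alg[OF pp pc eC eA eB eR1 eR2 eS])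
  show ?thesis
  proof
    fix v assume "v \<in> bowtie_V 8"
    then consider "v = C" | j where "v = L j" "j \<in> {1..10}" | j where "v = R j" "j \<in> {1..10}"
      unfolding V8_eq by auto
    then show "x v \<le> x C"
    proof cases
      case 1 then show ?thesis by simp
    next
      case (2 j)
      show ?thesis
      proof (cases "j = 1")
        case True then show ?thesis using 2 ord unfolding defs by simp
      next
        case False then have "j \<in> {2..10}" using 2 by auto
        then have "x v = b" using 2 yL by simp
        then show ?thesis using ord c_def by simp
      qed
    next
      case (3 j)
      show ?thesis
      proof (cases "j = 1 \<or> j = 2")
        case True then show ?thesis using 3 ord unfolding defs by auto
      next
        case False then have "j \<in> {3..10}" using 3 by auto
        then have "x v = s" using 3 yR by simp
        then show ?thesis using ord c_def by simp
      qed
    qed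
  qed
qed



definition yfun :: "real \<Rightarrow> real \<Rightarrow> real \<Rightarrow> real \<Rightarrow> real \<Rightarrow> bt_vertex \<Rightarrow> real" where
  "yfun c a b r s v = (case v of C \<Rightarrow> c
     | L j \<Rightarrow> (if j = 1 then a else if 2 \<le> j \<and> j \<le> 10 then b else 0)
     | R j \<Rightarrow> (if j = 1 \<or> j = 2 then r else if 3 \<le> j \<and> j \<le> 10 then s else 0))"

lemma yfun_simps:
  "yfun c a b r s C = c" "yfun c a b r s (L 1) = a" "yfun c a b r s (R 1) = r" "yfun c a b r s (R 2) = r"
  "yfun c a b r s (L (Suc 0)) = a" "yfun c a b r s (R (Suc 0)) = r"
  "2 \<le> j \<Longrightarrow> j \<le> 10 \<Longrightarrow> yfun c a b r s (L j) = b"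
  "3 \<le> j \<Longrightarrow> j \<le> 10 \<Longrightarrow> yfun c a b r s (R j) = s"
  by (auto simp: yfun_def)

lemma yfun_pos:
  assumes "c > 0" "a > 0" "b > 0" "r > 0" "s > 0"
  shows "\<forall>v\<in>bowtie_V 8. yfun c a b r s v > 0"
  using assms unfolding V8_eq by (auto simp: yfun_def)

lemma yfun_out:
  assumes "v \<notin> bowtie_V 8" shows "yfun c a b r s v = 0"
  using assms unfolding V8_eq yfun_def by (cases v) auto

lemma i110: "{1..10::nat} = insert 1 {2..10}" by auto
lemma i210: "{2..10::nat} = insert 2 {3..10}" by auto

lemma yfun_sum:
  fixes f :: "real \<Rightarrow> real"
  shows "(\<Sum>v\<in>bowtie_V 8. f (yfun c a b r s v)) = f c + f a + 9 * f b + 2 * f r + 8 * f s"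
proof -
  have L: "(\<Sum>j=1..10. f (yfun c a b r s (L j))) = f a + 9 * f b"
  proof -
    have "(\<Sum>j=1..10. f (yfun c a b r s (L j))) = f (yfun c a b r s (L 1)) + (\<Sum>j=2..10. f (yfun c a b r s (L j)))"
      by (subst i110) simp
    also have "(\<Sum>j=2..10. f (yfun c a b r s (L j))) = (\<Sum>j::nat=2..10. f b)"
      by (intro sum.cong) (auto simp: yfun_simps)
    finally show ?thesis by (simp add: yfun_simps)
  qed
  have R: "(\<Sum>j=1..10. f (yfun c a b r s (R j))) = 2 * f r + 8 * f s"
  proof -
    have "(\<Sum>j=1..10. f (yfun c a b r s (R j))) = f (yfun c a b r s (R 1)) + (\<Sum>j=2..10. f (yfun c a b r s (R j)))"
      by (subst i110) simp
    also have "(\<Sum>j=2..10. f (yfun c a b r s (R j))) = f (yfun c a b r s (R 2)) + (\<Sum>j=3..10. f (yfun c a b r s (R j)))"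
      by (subst i210) simp
    also have "(\<Sum>j=3..10. f (yfun c a b r s (R j))) = (\<Sum>j::nat=3..10. f s)"
      by (intro sum.cong) (auto simp: yfun_simps)
    finally show ?thesis by (simp add: yfun_simps)
  qed
  show ?thesis unfolding sum_V8 L R by (simp add: yfun_simps)
qed

lemma sumL: fixes g :: "real \<Rightarrow> real" shows "(\<Sum>j=2..10. g (yfun c a b r s (L j))) = 9 * g b"
proof -
  have "(\<Sum>j=2..10. g (yfun c a b r s (L j))) = (\<Sum>j::nat=2..10. g b)"
    by (intro sum.cong) (auto simp: yfun_simps)
  then show ?thesis by simp
qed

lemma sumR: fixes g :: "real \<Rightarrow> real" shows "(\<Sum>j=3..10. g (yfun c a b r s (R j))) = 8 * g s"
proof -
  have "(\<Sum>j=3..10. g (yfun c a b r s (R j))) = (\<Sum>j::nat=3..10. g s)"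
    by (intro sum.cong) (auto simp: yfun_simps)
  then show ?thesis by simp
qed

lemma V8_cases:
  assumes "v \<in> bowtie_V 8"
  obtains "v = C" | "v = L 1" | j where "v = L j" "2 \<le> j" "j \<le> 10" | "v = R 1" | "v = R 2"
    | j where "v = R j" "3 \<le> j" "j \<le> 10"
proof -
  from assms consider "v = C" | j where "v = L j" "j \<in> {1..10}" | j where "v = R j" "j \<in> {1..10}"
    unfolding V8_eq by auto
  then show ?thesis
  proof cases
    case 1 then show ?thesis using that by blast
  next
    case (2 j) then show ?thesis using that by (cases "j = 1") auto
  next
    case (3 j) then show ?thesis using that by (cases "j = 1"; cases "j = 2") auto
  qed
qed

lemma yfun_hyp_eig:
  assumes e1: "p * a^2 = 9 * (c * b)" and e2: "p * b^2 = c * a"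
    and e3: "p * c^2 = r^2 + 9 * (a * b)" and e4: "p * r^2 = c * r + 8 * (r * s)"
    and e6: "p * s^2 = r^2"
  shows "\<forall>i\<in>bowtie_V 8. p * yfun c a b r s i ^ 2 = NP (yfun c a b r s) i"
proof
  fix i assume "i \<in> bowtie_V 8"
  then show "p * yfun c a b r s i ^ 2 = NP (yfun c a b r s) i"
  proof (cases rule: V8_cases)
    case 1 then show ?thesis using e3 sumL[of "\<lambda>x. a * x"] by (simp add: NP_C yfun_simps power2_eq_square)
  next
    case 2 then show ?thesis using e1 sumL[of "\<lambda>x. c * x"] NP_L1[of "yfun c a b r s"] by (simp add: yfun_simps)
  next
    case (3 j) then show ?thesis using e2 by (simp add: NP_Lk yfun_simps)
  next
    case 4 then show ?thesis using e4 sumR[of "\<lambda>x. r * x"] NP_R1[of "yfun c a b r s"] by (simp add: yfun_simps)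
  next
    case 5 then show ?thesis using e4 sumR[of "\<lambda>x. r * x"] by (simp add: NP_R2 yfun_simps)
  next
    case (6 j) then show ?thesis using e6 by (simp add: NP_Rk yfun_simps power2_eq_square)
  qed
qed

lemma yfun_sh_eig:
  assumes eC: "m * c = 2 * r + 9 * a + 9 * b" and eA: "m * a = 9 * c + 9 * b" and eB: "m * b = c + a"
    and eR: "m * r = c + 9 * r + 8 * s" and eS: "m * s = 2 * r"
  shows "\<forall>i\<in>bowtie_V 8. m * yfun c a b r s i = NS (yfun c a b r s) i"
proof
  fix i assume "i \<in> bowtie_V 8"
  then show "m * yfun c a b r s i = NS (yfun c a b r s) i"
  proof (cases rule: V8_cases)
    case 1 then show ?thesis using eC sumL[of "\<lambda>x. a + x"] by (simp add: NS_C yfun_simps)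
  next
    case 2 then show ?thesis using eA sumL[of "\<lambda>x. c + x"] NS_L1[of "yfun c a b r s"] by (simp add: yfun_simps algebra_simps)
  next
    case (3 j) then show ?thesis using eB by (simp add: NS_Lk yfun_simps)
  next
    case 4 then show ?thesis using eR sumR[of "\<lambda>x. r + x"] NS_R1[of "yfun c a b r s"] by (simp add: yfun_simps algebra_simps)
  next
    case 5 then show ?thesis using eR sumR[of "\<lambda>x. r + x"] by (simp add: NS_R2 yfun_simps algebra_simps)
  next
    case (6 j) then show ?thesis using eS by (simp add: NS_Rk yfun_simps)
  qed
qed



lemma scale_eq:
  fixes y w :: "'v \<Rightarrow> real"
  assumes fin: "finite V" and b0: "b0 \<in> V" and py: "\<forall>v\<in>V. y v > 0" and pw: "\<forall>v\<in>V. w v > 0"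
    and rat: "\<forall>v\<in>V. w v / y v = w b0 / y b0"
    and sy: "(\<Sum>v\<in>V. y v ^ n) = 1" and sw: "(\<Sum>v\<in>V. w v ^ n) = 1" and n: "n > 0"
    and oy: "\<forall>v. v \<notin> V \<longrightarrow> y v = 0" and ow: "\<forall>v. v \<notin> V \<longrightarrow> w v = 0"
  shows "w = y"
proof -
  define k where "k = w b0 / y b0"
  have kp: "k > 0" using b0 py pw by (simp add: k_def)
  have wk: "w v = k * y v" if "v \<in> V" for v
  proof -
    have "w v / y v = k" using rat that by (simp add: k_def)
    moreover have "y v > 0" using py that by auto
    ultimately show ?thesis by (simp add: field_simps)
  qed
  have "1 = (\<Sum>v\<in>V. w v ^ n)" using sw by simp
  also have "\<dots> = (\<Sum>v\<in>V. k ^ n * y v ^ n)" using wk by (intro sum.cong) (auto simp: power_mult_distrib)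
  also have "\<dots> = k ^ n" using sy by (simp add: sum_distrib_left[symmetric])
  finally have kn: "k ^ n = 1 ^ n" by simp
  have k1: "k = 1" using power_eq_imp_eq_base[OF kn] kp n by simp
  show ?thesis
  proof
    fix v show "w v = y v"
    proof (cases "v \<in> V")
      case True then show ?thesis using wk k1 by simp
    next
      case False then show ?thesis using oy ow by simp
    qed
  qed
qed

lemma h_root: "\<exists>t::real. 21/10 \<le> t \<and> t \<le> 22/10 \<and> (t^6 - 81) * (t^3 - 8)^2 - t^6 = 0"
proof -
  have "continuous_on {21/10..22/10} (\<lambda>t::real. (t^6 - 81) * (t^3 - 8)^2 - t^6)"
    by (intro continuous_intros)
  moreover have "((21/10::real)^6 - 81) * ((21/10)^3 - 8)^2 - (21/10)^6 \<le> 0" by (simp add: power_divide)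
  moreover have "0 \<le> ((22/10::real)^6 - 81) * ((22/10)^3 - 8)^2 - (22/10)^6" by (simp add: power_divide)
  ultimately show ?thesis using IVT'[of "\<lambda>t::real. (t^6 - 81) * (t^3 - 8)^2 - t^6" "21/10" 0 "22/10"] by auto
qed

lemma hyp_params:
  "\<exists>(p::real) c a b r s. p > 0 \<and> c > 0 \<and> a > 0 \<and> b > 0 \<and> r > 0 \<and> s > 0 \<and>
     p * a^2 = 9 * (c * b) \<and> p * b^2 = c * a \<and> p * c^2 = r^2 + 9 * (a * b) \<and>
     p * r^2 = c * r + 8 * (r * s) \<and> p * s^2 = r^2"
proof -
  obtain t :: real where t: "21/10 \<le> t" "t \<le> 22/10" and h: "(t^6 - 81) * (t^3 - 8)^2 - t^6 = 0"
    using h_root by blast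
  have tp: "t > 0" using t by simp
  have "t^3 \<ge> (21/10)^3" using t by (intro power_mono) auto
  then have t8: "t^3 - 8 > 0" by (simp add: power3_eq_cube)
  define k where "k = root 3 (9::real)"
  have k3: "k^3 = 9" unfolding k_def by simp
  have kp: "k > 0" unfolding k_def by simp
  define a where "a = k^2 / t^2"
  define b where "b = k / t^2"
  define r where "r = t / (t^3 - 8)"
  define s where "s = r / t"
  have ha: "a * t^2 = k^2" using tp by (simp add: a_def)
  have hb: "b * t^2 = k" using tp by (simp add: b_def)
  have hr: "r * (t^3 - 8) = t" using t8 by (simp add: r_def)
  have hs: "s * t = r" using tp by (simp add: s_def)
  have pa: "a > 0" "b > 0" "r > 0" "s > 0" using kp tp t8 by (simp_all add: a_def b_def r_def s_def)
  have E1: "t^2 * (t^2 * a^2 - 9 * b) = 0" using ha hb k3 by algebra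
  have E2: "t^2 * (t^2 * b^2 - a) = 0" using ha hb by algebra
  have E3: "(t^4 * (t^3 - 8)^2) * (t^2 - (r^2 + 9 * (a * b))) = 0" using ha hb hr k3 h by algebra
  have hr': "r * t^3 = t + 8 * r" using hr by (simp add: algebra_simps)
  have "t * (t^2 * r^2 - (r + 8 * (r * s))) = r * (r * t^3) - t * r - 8 * r * (s * t)"
    by (simp add: algebra_simps power2_eq_square power3_eq_cube)
  also have "\<dots> = 0" using hr' hs by (simp add: algebra_simps)
  finally have E4: "t * (t^2 * r^2 - (r + 8 * (r * s))) = 0" .
  have "t^2 * s^2 = (s * t)^2" by (simp add: power_mult_distrib)
  then have E6: "t^2 * s^2 = r^2" using hs by simp
  have nz: "t^2 \<noteq> 0" "t^4 * (t^3 - 8)^2 \<noteq> 0" "t \<noteq> 0" using tp t8 by auto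
  have t2: "t^2 > 0" using tp by simp
  have q1: "t^2 * a^2 = 9 * (1 * b)" using E1 nz(1) by simp
  have q2: "t^2 * b^2 = 1 * a" using E2 nz(1) by simp
  have q3: "t^2 * 1^2 = r^2 + 9 * (a * b)" using E3 nz(2) by simp
  have q4: "t^2 * r^2 = 1 * r + 8 * (r * s)" using E4 nz(3) by simp
  show ?thesis
    apply (rule exI[of _ "t^2"], rule exI[of _ 1], rule exI[of _ a], rule exI[of _ b], rule exI[of _ r], rule exI[of _ s])
    using t2 zero_less_one pa q1 q2 q3 q4 E6 by (intro conjI) assumption+
qed



lemma hyp_normalized:
  "\<exists>(p::real) c a b r s. p > 0 \<and> c > 0 \<and> a > 0 \<and> b > 0 \<and> r > 0 \<and> s > 0 \<and>
     p * a^2 = 9 * (c * b) \<and> p * b^2 = c * a \<and> p * c^2 = r^2 + 9 * (a * b) \<and>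
     p * r^2 = c * r + 8 * (r * s) \<and> p * s^2 = r^2 \<and>
     c^3 + a^3 + 9 * b^3 + 2 * r^3 + 8 * s^3 = 1"
proof -
  obtain p c a b r s :: real where pos: "p > 0" "c > 0" "a > 0" "b > 0" "r > 0" "s > 0"
    and e1: "p * a^2 = 9 * (c * b)" and e2: "p * b^2 = c * a" and e3: "p * c^2 = r^2 + 9 * (a * b)"
    and e4: "p * r^2 = c * r + 8 * (r * s)" and e6: "p * s^2 = r^2"
    using hyp_params by blast
  define N where "N = c^3 + a^3 + 9 * b^3 + 2 * r^3 + 8 * s^3"
  have "c^3 > 0" "a^3 > 0" "b^3 > 0" "r^3 > 0" "s^3 > 0" using pos by simp_all
  then have Np: "N > 0" unfolding N_def by linarith
  define th where "th = root 3 N"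
  have th3: "th^3 = N" using Np by (simp add: th_def)
  have thp: "th > 0" using Np by (simp add: th_def)
  have sq: "\<And>x. (x / th)^2 = x^2 / th^2" "\<And>x y. (x / th) * (y / th) = (x * y) / th^2"
    by (simp_all add: power_divide power2_eq_square)
  have f1: "p * (a/th)^2 = 9 * ((c/th) * (b/th))" unfolding sq using e1 by simp
  have f2: "p * (b/th)^2 = (c/th) * (a/th)" unfolding sq using e2 by simp
  have f3: "p * (c/th)^2 = (r/th)^2 + 9 * ((a/th) * (b/th))" unfolding sq using e3 by (simp add: add_divide_distrib)
  have f4: "p * (r/th)^2 = (c/th) * (r/th) + 8 * ((r/th) * (s/th))" unfolding sq using e4 by (simp add: add_divide_distrib)
  have f6: "p * (s/th)^2 = (r/th)^2" unfolding sq using e6 by simp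
  have "(c/th)^3 + (a/th)^3 + 9 * (b/th)^3 + 2 * (r/th)^3 + 8 * (s/th)^3 = N / th^3"
    by (simp add: N_def power_divide add_divide_distrib)
  also have "\<dots> = 1" using th3 Np by simp
  finally have nrm: "(c/th)^3 + (a/th)^3 + 9 * (b/th)^3 + 2 * (r/th)^3 + 8 * (s/th)^3 = 1" .
  have pos': "c/th > 0" "a/th > 0" "b/th > 0" "r/th > 0" "s/th > 0" using pos thp by simp_all
  show ?thesis
    apply (rule exI[of _ p], rule exI[of _ "c/th"], rule exI[of _ "a/th"], rule exI[of _ "b/th"],
        rule exI[of _ "r/th"], rule exI[of _ "s/th"])
    using pos(1) pos' f1 f2 f3 f4 f6 nrm by (intro conjI) assumption+
qed

lemma hyp_principal:
  "principal_eigvec_hyp 3 (bowtie_V 8) (bowtie_E 8) (R 1) > principal_eigvec_hyp 3 (bowtie_V 8) (bowtie_E 8) C"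
proof -
  obtain p c a b r s :: real where pos: "p > 0" "c > 0" "a > 0" "b > 0" "r > 0" "s > 0"
    and e1: "p * a^2 = 9 * (c * b)" and e2: "p * b^2 = c * a" and e3: "p * c^2 = r^2 + 9 * (a * b)"
    and e4: "p * r^2 = c * r + 8 * (r * s)" and e6: "p * s^2 = r^2"
    and nrm: "c^3 + a^3 + 9 * b^3 + 2 * r^3 + 8 * s^3 = 1"
    using hyp_normalized by blast
  define y0 where "y0 = yfun c a b r s"
  have pos0: "\<forall>v\<in>bowtie_V 8. y0 v > 0" unfolding y0_def using pos by (intro yfun_pos) auto
  have out0: "\<forall>v. v \<notin> bowtie_V 8 \<longrightarrow> y0 v = 0" unfolding y0_def using yfun_out by blast
  have sum0: "(\<Sum>v\<in>bowtie_V 8. y0 v ^ 3) = 1"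
    unfolding y0_def using yfun_sum[of "\<lambda>x. x^3"] nrm by simp
  have eig0: "\<forall>i\<in>bowtie_V 8. p * y0 i ^ 2 = (\<Sum>e\<in>{e\<in>bowtie_E 8. i \<in> e}. \<Prod>u\<in>e - {i}. y0 u)"
    using yfun_hyp_eig[OF e1 e2 e3 e4 e6] unfolding y0_def NP_def .
  have abs0: "(\<Sum>v\<in>bowtie_V 8. \<bar>y0 v\<bar> ^ 3) = 1"
    using sum0 pos0 by (subst sum.cong[OF refl, where h = "\<lambda>v. y0 v ^ 3"]) auto
  have SR: "spec_radius_hyp 3 (bowtie_V 8) (bowtie_E 8) = p"
    unfolding spec_radius_hyp_def
  proof (rule cSup_eq_maximum)
    have "F_hyp 3 (bowtie_E 8) y0 = p * (\<Sum>v\<in>bowtie_V 8. y0 v ^ 3)"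
      by (rule hyp_value[OF finite_V8 finite_E8 sub8 card8 pos0 eig0])
    then have "F_hyp 3 (bowtie_E 8) y0 = p" using sum0 by simp
    then show "p \<in> {F_hyp 3 (bowtie_E 8) z |z. (\<Sum>v\<in>bowtie_V 8. \<bar>z v\<bar> ^ 3) = 1}"
      using abs0 by force
  next
    fix x assume "x \<in> {F_hyp 3 (bowtie_E 8) z |z. (\<Sum>v\<in>bowtie_V 8. \<bar>z v\<bar> ^ 3) = 1}"
    then obtain z where x: "x = F_hyp 3 (bowtie_E 8) z" and z: "(\<Sum>v\<in>bowtie_V 8. \<bar>z v\<bar> ^ 3) = 1" by blast
    have "F_hyp 3 (bowtie_E 8) z \<le> p * (\<Sum>v\<in>bowtie_V 8. \<bar>z v\<bar> ^ 3)"
      by (rule hyp_upper[OF finite_V8 finite_E8 sub8 card8 pos0 eig0])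
    then show "x \<le> p" using x z by simp
  qed
  define Pred where "Pred = (\<lambda>y::bt_vertex \<Rightarrow> real.
      (\<forall>v\<in>bowtie_V 8. y v > 0) \<and> (\<forall>v. v \<notin> bowtie_V 8 \<longrightarrow> y v = 0) \<and>
      (\<Sum>v\<in>bowtie_V 8. y v ^ 3) = 1 \<and>
      (\<forall>i\<in>bowtie_V 8. spec_radius_hyp 3 (bowtie_V 8) (bowtie_E 8) * y i ^ (3 - 1)
               = (\<Sum>e\<in>{e\<in>bowtie_E 8. i \<in> e}. \<Prod>u\<in>e - {i}. y u)))"
  have PE: "principal_eigvec_hyp 3 (bowtie_V 8) (bowtie_E 8) = (THE y. Pred y)"
    unfolding principal_eigvec_hyp_def Pred_def ..
  have P0: "Pred y0" unfolding Pred_def SR using pos0 out0 sum0 eig0 by simp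
  have uniq: "w = y0" if "Pred w" for w
  proof -
    have posw: "\<forall>v\<in>bowtie_V 8. w v > 0" and outw: "\<forall>v. v \<notin> bowtie_V 8 \<longrightarrow> w v = 0"
      and sumw: "(\<Sum>v\<in>bowtie_V 8. w v ^ 3) = 1"
      and eigw: "\<forall>i\<in>bowtie_V 8. p * w i ^ 2 = (\<Sum>e\<in>{e\<in>bowtie_E 8. i \<in> e}. \<Prod>u\<in>e - {i}. w u)"
      using that unfolding Pred_def SR by simp_all
    have rat: "\<forall>e\<in>bowtie_E 8. \<forall>u\<in>e. \<forall>v\<in>e. w u / y0 u = w v / y0 v"
      by (rule hyp_ratio[OF finite_V8 finite_E8 sub8 card8 pos0 eig0 posw eigw])
    have "\<forall>v\<in>bowtie_V 8. w v / y0 v = w C / y0 C"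
      by (rule conn8[OF rat])
    then show ?thesis
      by (rule scale_eq[OF finite_V8 memV(1) pos0 posw _ sum0 sumw _ out0 outw]) simp
  qed
  have ex1: "\<exists>!y. Pred y" using P0 uniq by blast
  have PP: "Pred (principal_eigvec_hyp 3 (bowtie_V 8) (bowtie_E 8))" unfolding PE by (rule theI'[OF ex1])
  define y where "y = principal_eigvec_hyp 3 (bowtie_V 8) (bowtie_E 8)"
  have posy: "\<forall>v\<in>bowtie_V 8. y v > 0" and eigy: "\<forall>i\<in>bowtie_V 8. p * y i ^ 2 = NP y i"
    using PP unfolding y_def[symmetric] Pred_def SR NP_def by simp_all
  have "y (R 1) > y C" by (rule hyp_order[OF posy eigy])
  then show ?thesis unfolding y_def .
qed



lemma mu_root: "\<exists>m::real. 114/10 \<le> m \<and> m \<le> 116/10 \<and>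
   (m^2 - 9)^2 * (m^2 - 9*m - 16) - 81 * (m + 1)^2 * (m^2 - 9*m - 16) - 2 * m^2 * (m^2 - 9) = 0"
proof -
  let ?f = "\<lambda>m::real. (m^2 - 9)^2 * (m^2 - 9*m - 16) - 81 * (m + 1)^2 * (m^2 - 9*m - 16) - 2 * m^2 * (m^2 - 9)"
  have "continuous_on {114/10..116/10} ?f" by (intro continuous_intros)
  moreover have "?f (114/10) \<le> 0" by (simp add: power_divide)
  moreover have "0 \<le> ?f (116/10)" by (simp add: power_divide)
  ultimately show ?thesis using IVT'[of ?f "114/10" 0 "116/10"] by auto
qed

lemma lin_scale: "m * x = (y::real) \<Longrightarrow> m * (x / th) = y / th" by simp

lemma sh_params:
  "\<exists>(m::real) c a b r s. m > 0 \<and> c > 0 \<and> a > 0 \<and> b > 0 \<and> r > 0 \<and> s > 0 \<and>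
     m * c = 2 * r + 9 * a + 9 * b \<and> m * a = 9 * c + 9 * b \<and> m * b = c + a \<and>
     m * r = c + 9 * r + 8 * s \<and> m * s = 2 * r"
proof -
  obtain m :: real where mb: "114/10 \<le> m" "m \<le> 116/10"
    and P: "(m^2 - 9)^2 * (m^2 - 9*m - 16) - 81 * (m + 1)^2 * (m^2 - 9*m - 16) - 2 * m^2 * (m^2 - 9) = 0"
    using mu_root by blast
  have mp: "m > 0" using mb by simp
  have "m * (m - 9) \<ge> (114/10) * (24/10)" using mb by (intro mult_mono) auto
  then have D2: "m^2 - 9*m - 16 > 0" by (simp add: power2_eq_square algebra_simps)
  have "m^2 \<ge> (114/10)^2" using mb by (intro power_mono) auto
  then have D1: "m^2 - 9 > 0" by (simp add: power_divide)
  define a where "a = 9 * (m + 1) / (m^2 - 9)"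
  define b where "b = (1 + a) / m"
  define r where "r = m / (m^2 - 9*m - 16)"
  define s where "s = 2 * r / m"
  have ha: "a * (m^2 - 9) = 9 * (m + 1)" using D1 by (simp add: a_def)
  have hb: "b * m = 1 + a" using mp by (simp add: b_def)
  have hr: "r * (m^2 - 9*m - 16) = m" using D2 by (simp add: r_def)
  have hs: "s * m = 2 * r" using mp by (simp add: s_def)
  have pa: "a > 0" using D1 mb by (simp add: a_def)
  have pb: "b > 0" using pa mp by (simp add: b_def)
  have pr: "r > 0" using D2 mp by (simp add: r_def)
  have ps: "s > 0" using pr mp by (simp add: s_def)
  have A: "m * (m * a - (9 * 1 + 9 * b)) = 0" using ha hb by algebra
  have "m * (m * r - (1 + 9 * r + 8 * s)) = r * (m^2 - 9*m - 16) - m - 8 * (s * m - 2 * r)"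
    by (simp add: algebra_simps power2_eq_square)
  also have "\<dots> = 0" using hr hs by simp
  finally have R: "m * (m * r - (1 + 9 * r + 8 * s)) = 0" .
  have Cc: "(m * (m^2 - 9) * (m^2 - 9*m - 16)) * (m * 1 - (2 * r + 9 * a + 9 * b)) = 0"
    using ha hb hr P by algebra
  have nz: "m \<noteq> 0" "m * (m^2 - 9) * (m^2 - 9*m - 16) \<noteq> 0" using mp D1 D2 by auto
  have q1: "m * 1 = 2 * r + 9 * a + 9 * b" using Cc nz(2) by simp
  have q2: "m * a = 9 * 1 + 9 * b" using A nz(1) by simp
  have q3: "m * b = 1 + a" using hb by (simp add: mult.commute)
  have q4: "m * r = 1 + 9 * r + 8 * s" using R nz(1) by simp
  have q5: "m * s = 2 * r" using hs by (simp add: mult.commute)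
  show ?thesis
    apply (rule exI[of _ m], rule exI[of _ 1], rule exI[of _ a], rule exI[of _ b], rule exI[of _ r], rule exI[of _ s])
    using mp zero_less_one pa pb pr ps q1 q2 q3 q4 q5 by (intro conjI) assumption+
qed

lemma sh_normalized:
  "\<exists>(m::real) c a b r s. m > 0 \<and> c > 0 \<and> a > 0 \<and> b > 0 \<and> r > 0 \<and> s > 0 \<and>
     m * c = 2 * r + 9 * a + 9 * b \<and> m * a = 9 * c + 9 * b \<and> m * b = c + a \<and>
     m * r = c + 9 * r + 8 * s \<and> m * s = 2 * r \<and>
     c^2 + a^2 + 9 * b^2 + 2 * r^2 + 8 * s^2 = 1"
proof -
  obtain m c a b r s :: real where pos: "m > 0" "c > 0" "a > 0" "b > 0" "r > 0" "s > 0"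
    and eC: "m * c = 2 * r + 9 * a + 9 * b" and eA: "m * a = 9 * c + 9 * b" and eB: "m * b = c + a"
    and eR: "m * r = c + 9 * r + 8 * s" and eS: "m * s = 2 * r"
    using sh_params by blast
  define N where "N = c^2 + a^2 + 9 * b^2 + 2 * r^2 + 8 * s^2"
  have "c^2 > 0" "a^2 > 0" "b^2 > 0" "r^2 > 0" "s^2 > 0" using pos by simp_all
  then have Np: "N > 0" unfolding N_def by linarith
  define th where "th = sqrt N"
  have th2: "th^2 = N" using Np by (simp add: th_def)
  have thp: "th > 0" using Np by (simp add: th_def)
  have f1: "m * (c/th) = 2 * (r/th) + 9 * (a/th) + 9 * (b/th)" using lin_scale[OF eC, of th] by (simp add: add_divide_distrib)
  have f2: "m * (a/th) = 9 * (c/th) + 9 * (b/th)" using lin_scale[OF eA, of th] by (simp add: add_divide_distrib)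
  have f3: "m * (b/th) = (c/th) + (a/th)" using lin_scale[OF eB, of th] by (simp add: add_divide_distrib)
  have f4: "m * (r/th) = (c/th) + 9 * (r/th) + 8 * (s/th)" using lin_scale[OF eR, of th] by (simp add: add_divide_distrib)
  have f5: "m * (s/th) = 2 * (r/th)" using lin_scale[OF eS, of th] by simp
  have "(c/th)^2 + (a/th)^2 + 9 * (b/th)^2 + 2 * (r/th)^2 + 8 * (s/th)^2 = N / th^2"
    by (simp add: N_def power_divide add_divide_distrib)
  also have "\<dots> = 1" using th2 Np by simp
  finally have nrm: "(c/th)^2 + (a/th)^2 + 9 * (b/th)^2 + 2 * (r/th)^2 + 8 * (s/th)^2 = 1" .
  have pos': "c/th > 0" "a/th > 0" "b/th > 0" "r/th > 0" "s/th > 0" using pos thp by simp_all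
  show ?thesis
    apply (rule exI[of _ m], rule exI[of _ "c/th"], rule exI[of _ "a/th"], rule exI[of _ "b/th"],
        rule exI[of _ "r/th"], rule exI[of _ "s/th"])
    using pos(1) pos' f1 f2 f3 f4 f5 nrm by (intro conjI) assumption+
qed

lemma shadow_sym: "shadow_mult E u v = shadow_mult E v u"
proof -
  have "{e\<in>E. u \<in> e \<and> v \<in> e} = {e\<in>E. v \<in> e \<and> u \<in> e}" by auto
  then show ?thesis by (simp add: shadow_mult_def)
qed

lemma shadow_edge_pos:
  assumes "e \<in> bowtie_E 8" "u \<in> e" "v \<in> e" "u \<noteq> v"
  shows "real (shadow_mult (bowtie_E 8) u v) > 0"
proof -
  have "e \<in> {e\<in>bowtie_E 8. u \<in> e \<and> v \<in> e}" using assms by simp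
  moreover have "finite {e\<in>bowtie_E 8. u \<in> e \<and> v \<in> e}" using finite_E8 by simp
  ultimately have "card {e\<in>bowtie_E 8. u \<in> e \<and> v \<in> e} > 0" by (auto simp: card_gt_0_iff)
  then show ?thesis using assms(4) by (simp add: shadow_mult_def)
qed

lemma sh_principal:
  "\<forall>v\<in>bowtie_V 8. principal_eigvec_shadow (bowtie_V 8) (bowtie_E 8) v \<le> principal_eigvec_shadow (bowtie_V 8) (bowtie_E 8) C"
proof -
  obtain m c a b r s :: real where pos: "m > 0" "c > 0" "a > 0" "b > 0" "r > 0" "s > 0"
    and eC: "m * c = 2 * r + 9 * a + 9 * b" and eA: "m * a = 9 * c + 9 * b" and eB: "m * b = c + a"
    and eR: "m * r = c + 9 * r + 8 * s" and eS: "m * s = 2 * r"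
    and nrm: "c^2 + a^2 + 9 * b^2 + 2 * r^2 + 8 * s^2 = 1"
    using sh_normalized by blast
  define x0 where "x0 = yfun c a b r s"
  have pos0: "\<forall>v\<in>bowtie_V 8. x0 v > 0" unfolding x0_def using pos by (intro yfun_pos) auto
  have out0: "\<forall>v. v \<notin> bowtie_V 8 \<longrightarrow> x0 v = 0" unfolding x0_def using yfun_out by blast
  have sum0: "(\<Sum>v\<in>bowtie_V 8. x0 v ^ 2) = 1"
    unfolding x0_def using yfun_sum[of "\<lambda>x. x^2"] nrm by simp
  have eig0: "\<forall>u\<in>bowtie_V 8. m * x0 u = (\<Sum>v\<in>bowtie_V 8. real (shadow_mult (bowtie_E 8) u v) * x0 v)"
    using yfun_sh_eig[OF eC eA eB eR eS] unfolding x0_def shadow_NS .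
  define Pred where "Pred = (\<lambda>x::bt_vertex \<Rightarrow> real.
      (\<forall>v\<in>bowtie_V 8. x v > 0) \<and> (\<forall>v. v \<notin> bowtie_V 8 \<longrightarrow> x v = 0) \<and>
      (\<Sum>v\<in>bowtie_V 8. x v ^ 2) = 1 \<and>
      (\<exists>mu::real. \<forall>u\<in>bowtie_V 8. mu * x u = (\<Sum>v\<in>bowtie_V 8. real (shadow_mult (bowtie_E 8) u v) * x v)))"
  have PE: "principal_eigvec_shadow (bowtie_V 8) (bowtie_E 8) = (THE x. Pred x)"
    unfolding principal_eigvec_shadow_def Pred_def ..
  have P0: "Pred x0" unfolding Pred_def using pos0 out0 sum0 eig0 by blast
  have uniq: "w = x0" if Pw: "Pred w" for w
  proof -
    obtain nu where posw: "\<forall>v\<in>bowtie_V 8. w v > 0" and outw: "\<forall>v. v \<notin> bowtie_V 8 \<longrightarrow> w v = 0"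
      and sumw: "(\<Sum>v\<in>bowtie_V 8. w v ^ 2) = 1"
      and eigw: "\<forall>u\<in>bowtie_V 8. nu * w u = (\<Sum>v\<in>bowtie_V 8. real (shadow_mult (bowtie_E 8) u v) * w v)"
      using Pw unfolding Pred_def by blast
    have rr: "\<forall>u\<in>bowtie_V 8. \<forall>v\<in>bowtie_V 8. real (shadow_mult (bowtie_E 8) u v) > 0 \<longrightarrow> w u / x0 u = w v / x0 v"
      by (rule shadow_ratio[OF finite_V8 _ _ posw pos0 eigw eig0]) (simp_all add: shadow_sym)
    have rat: "\<forall>e\<in>bowtie_E 8. \<forall>u\<in>e. \<forall>v\<in>e. w u / x0 u = w v / x0 v"
    proof (intro ballI)
      fix e u v assume e: "e \<in> bowtie_E 8" and uv: "u \<in> e" "v \<in> e"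
      show "w u / x0 u = w v / x0 v"
      proof (cases "u = v")
        case True then show ?thesis by simp
      next
        case False
        have "u \<in> bowtie_V 8" "v \<in> bowtie_V 8" using e uv sub8 by auto
        then show ?thesis using rr shadow_edge_pos[OF e uv False] by blast
      qed
    qed
    have "\<forall>v\<in>bowtie_V 8. w v / x0 v = w C / x0 C"
      by (rule conn8[OF rat])
    then show ?thesis
      by (rule scale_eq[OF finite_V8 memV(1) pos0 posw _ sum0 sumw _ out0 outw]) simp
  qed
  have ex1: "\<exists>!x. Pred x" using P0 uniq by blast
  have PP: "Pred (principal_eigvec_shadow (bowtie_V 8) (bowtie_E 8))" unfolding PE by (rule theI'[OF ex1])
  define z where "z = principal_eigvec_shadow (bowtie_V 8) (bowtie_E 8)"
  obtain mu where posz: "\<forall>v\<in>bowtie_V 8. z v > 0"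
    and eigz: "\<forall>u\<in>bowtie_V 8. mu * z u = (\<Sum>v\<in>bowtie_V 8. real (shadow_mult (bowtie_E 8) u v) * z v)"
    using PP unfolding z_def[symmetric] Pred_def by blast
  have eigz': "\<forall>i\<in>bowtie_V 8. mu * z i = NS z i" using eigz unfolding shadow_NS .
  have "\<forall>v\<in>bowtie_V 8. z v \<le> z C" by (rule sh_order[OF posz eigz'])
  then show ?thesis unfolding z_def .
qed



lemma sorted_le_last: "sorted xs \<Longrightarrow> y \<in> set xs \<Longrightarrow> y \<le> last (xs::real list)"
  by (induction xs) (auto simp: last_in_set)

lemma rank1_char:
  fixes x :: "'v \<Rightarrow> real"
  assumes "finite V" "V \<noteq> {}"
  shows "rank_class V x 1 = {v\<in>V. \<forall>u\<in>V. x u \<le> x v}"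
proof -
  define xs where "xs = sorted_list_of_set (x ` V)"
  have fin: "finite (x ` V)" using assms by simp
  have sx: "set xs = x ` V" unfolding xs_def using fin by simp
  have so: "sorted xs" unfolding xs_def by simp
  have ne: "xs \<noteq> []" using sx assms by auto
  have rv: "rank_values V x = rev xs" unfolding rank_values_def xs_def ..
  have len: "1 \<le> length (rank_values V x)" using ne rv by (cases xs) auto
  have w: "rank_values V x ! 0 = last xs" unfolding rv using ne by (simp add: hd_rev[symmetric] hd_conv_nth)
  have lin: "last xs \<in> x ` V" using ne sx last_in_set by metis
  have lmax: "\<forall>u\<in>V. x u \<le> last xs" using sorted_le_last[OF so] sx by auto
  show ?thesis
  proof (intro set_eqI iffI)
    fix v assume "v \<in> rank_class V x 1"
    then have "v \<in> V" "x v = last xs" unfolding rank_class_def using w by auto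
    then show "v \<in> {v\<in>V. \<forall>u\<in>V. x u \<le> x v}" using lmax by auto
  next
    fix v assume v: "v \<in> {v\<in>V. \<forall>u\<in>V. x u \<le> x v}"
    obtain u where u: "u \<in> V" "last xs = x u" using lin by auto
    have "x v = last xs" using v u lmax by (metis (mono_tags, lifting) antisym mem_Collect_eq)
    then show "v \<in> rank_class V x 1" unfolding rank_class_def using v len w by auto
  qed
qed

theorem theorem4p3:
  shows "umbral_index 3 (bowtie_V 8) (bowtie_E 8) = 1
     \<and> rank_class (bowtie_V 8) (principal_eigvec_hyp 3 (bowtie_V 8) (bowtie_E 8)) 1
       \<noteq> rank_class (bowtie_V 8) (principal_eigvec_shadow (bowtie_V 8) (bowtie_E 8)) 1"
proof -
  define y where "y = principal_eigvec_hyp 3 (bowtie_V 8) (bowtie_E 8)"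
  define z where "z = principal_eigvec_shadow (bowtie_V 8) (bowtie_E 8)"
  have ne: "bowtie_V 8 \<noteq> {}" using memV(1) by auto
  have hy: "y (R 1) > y C" unfolding y_def by (rule hyp_principal)
  have hz: "\<forall>v\<in>bowtie_V 8. z v \<le> z C" unfolding z_def by (rule sh_principal)
  have R1: "R 1 \<in> bowtie_V 8" by (rule memV(3)) simp
  have "C \<notin> rank_class (bowtie_V 8) y 1"
    unfolding rank1_char[OF finite_V8 ne] using R1 hy by force
  moreover have "C \<in> rank_class (bowtie_V 8) z 1"
    unfolding rank1_char[OF finite_V8 ne] using memV(1) hz by simp
  ultimately have d: "rank_class (bowtie_V 8) y 1 \<noteq> rank_class (bowtie_V 8) z 1" by blast
  have "umbral_index 3 (bowtie_V 8) (bowtie_E 8) = 1"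
    unfolding umbral_index_def Let_def y_def[symmetric] z_def[symmetric]
  proof -
    have nall: "\<not> (\<forall>i\<ge>1. rank_class (bowtie_V 8) y i = rank_class (bowtie_V 8) z i)" using d by auto
    have "(LEAST i. 1 \<le> i \<and> rank_class (bowtie_V 8) y i \<noteq> rank_class (bowtie_V 8) z i) = 1"
      by (rule Least_equality) (use d in auto)
    then show "(if \<forall>i\<ge>1. rank_class (bowtie_V 8) y i = rank_class (bowtie_V 8) z i then 0
        else LEAST i. 1 \<le> i \<and> rank_class (bowtie_V 8) y i \<noteq> rank_class (bowtie_V 8) z i) = 1"
      using nall by simp
  qed
  then show ?thesis using d unfolding y_def z_def by simp
qed


end
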